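(* Let $A\in\mathbb{R}^{n\times n}$ be such that, for every $j\in\{1,\dots,q\}$, $\Lambda_j$ is real or $\Lambda_j$ is complex. Let $y_0\in\mathbb{R}^n$ and unit $\hat z_0\in\mathbb{R}^n$ with $w^{(1)}y_0\ne0$ and $w^{(1)}\hat z_0\neq0$. Then, for every $t$ with $\epsilon(t,\hat y_0)<1$, $$K(t,y_0,\hat z_0)\approx K_\infty(t,y_0,\hat z_0)\ \text{with precision}\ \frac{\epsilon(t,\hat z_0)+\epsilon(t,\hat y_0)}{1-\epsilon(t,\hat y_0)},\qquad K(t,y_0)\approx K_\infty(t,y_0)\ \text{with precision}\ \frac{\epsilon(t)+\epsilon(t,\hat y_0)}{1-\epsilon(t,\hat y_0)},$$ where for $u\in\{\hat y_0,\hat z_0\}$ $$\epsilon(t,u)=\sum_{j=2}^q e^{(r_j-r_1)t}\frac{f_j}{f_1}\cdot\frac{|\hat w^{(j)}u|}{|\hat w^{(1)}u|}G_j(t,u),\qquad \epsilon(t)=\sum_{j=2}^q e^{(r_j-r_1)t}\frac{f_j}{f_1}G_j(t),$$ and $G_j$ is given by: (1) if $\Lambda_j,\Lambda_1$ both real, $G_j(t,u)=G_j(t)=1$; (2) if $\Lambda_j$ complex, $\Lambda_1$ real, $G_j(t,u)=2\|\hat\Theta_j(t,u)\|$, $G_j(t)=2\|\hat\Theta_j(t)\|$; (3) if $\Lambda_j$ real, $\Lambda_1$ complex, $G_j(t,u)=1/(2\|\hat\Theta_1(t,u)\|)$, $G_j(t)=1/(2\|\hat\Theta_1(t)\|)$;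 (4) if both complex, $G_j(t,u)=\|\hat\Theta_j(t,u)\|/\|\hat\Theta_1(t,u)\|$, $G_j(t)=\|\hat\Theta_j(t)\|/\|\hat\Theta_1(t)\|$.
   Context: $\|\cdot\|$ is a vector norm on $\mathbb{C}^n$, used on $\mathbb{R}^n$ by restriction; real matrices have the norm induced over real vectors; for a row $w$, $\|w\|=\max_{\|u\|=1}|wu|$ (over $\mathbb{R}^n$ for real $w$, over $\mathbb{C}^n$ for complex $w$). $\hat y_0=y_0/\|y_0\|$, $K(t,y_0,\hat z_0)=\|e^{tA}\hat z_0\|/\|e^{tA}\hat y_0\|$, $K(t,y_0)=\|e^{tA}\|/\|e^{tA}\hat y_0\|$. Let $r_1>r_2>\dots>r_q$ be the distinct real parts of the eigenvalues of $A$ and $\Lambda_j$ the set of eigenvalues with real part $r_j$. $\Lambda_j$ is real if it consists of one real simple eigenvalue $\lambda_j$; $\Lambda_j$ is complex if it consists exactly of a pair of simple complex conjugate eigenvalues $\lambda_j,\overline{\lambda_j}$ with $\omega_j=\operatorname{Im}\lambda_j>0$. In either case $w^{(j)}$ (row) and $v^{(j)}$ (column) are left and right eigenvectors for $\lambda_j$ (real in the real case), $\hat w^{(j)}=w^{(j)}/\|w^{(j)}\|$, $\hat v^{(j)}=v^{(j)}/\|v^{(j)}\|$, and $f_j=\|w^{(j)}\|\,\|v^{(j)}\|$. For complex $\Lambda_j$: polar forms $\hat v^{(j)}_k=|\hat v^{(j)}_k|e^{\sqrt{-1}\alpha_{jk}}$, $\hat w^{(j)}_l=|\hat w^{(j)}_l|e^{\sqrt{-1}\beta_{jl}}$,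 $\hat w^{(j)}u=|\hat w^{(j)}u|e^{\sqrt{-1}\gamma_j(u)}$ ($u\in\mathbb{R}^n$), $\hat\Theta_j(t,u)=(|\hat v^{(j)}_k|\cos(\omega_jt+\alpha_{jk}+\gamma_j(u)))_{k=1}^n$, $\hat\Theta_j(t)=(|\hat v^{(j)}_k||\hat w^{(j)}_l|\cos(\omega_jt+\alpha_{jk}+\beta_{jl}))_{k,l=1}^n$. Asymptotic condition numbers: if $\Lambda_1$ is real, $K_\infty(t,y_0,\hat z_0)=|\hat w^{(1)}\hat z_0|/|\hat w^{(1)}\hat y_0|$ and $K_\infty(t,y_0)=1/|\hat w^{(1)}\hat y_0|$; if $\Lambda_1$ is complex, $K_\infty(t,y_0,\hat z_0)=\frac{|\hat w^{(1)}\hat z_0|}{|\hat w^{(1)}\hat y_0|}\cdot\frac{\|\hat\Theta_1(t,\hat z_0)\|}{\|\hat\Theta_1(t,\hat y_0)\|}$ and $K_\infty(t,y_0)=\frac{1}{|\hat w^{(1)}\hat y_0|}\cdot\frac{\|\hat\Theta_1(t)\|}{\|\hat\Theta_1(t,\hat y_0)\|}$. For $a,b\in\mathbb{R}$, $\epsilon\ge0$: "$a\approx b$ with precision $\epsilon$" means $a=b(1+\chi)$ with $|\chi|\le\epsilon$. *)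

theory Defs
  imports "HOL-Analysis.Analysis" "HOL-Computational_Algebra.Polynomial"
begin

definition cvec :: "real^'n \<Rightarrow> complex^'n" where
  "cvec x = (\<chi> i. complex_of_real (x $ i))"

definition cmat :: "real^'n^'m \<Rightarrow> complex^'n^'m" where
  "cmat M = (\<chi> i j. complex_of_real (M $ i $ j))"

definition is_real_vec :: "complex^'n \<Rightarrow> bool" where
  "is_real_vec x \<longleftrightarrow> (\<forall>i. Im (x $ i) = 0)"

definition is_cnorm :: "(complex^'n \<Rightarrow> real) \<Rightarrow> bool" where
  "is_cnorm N \<longleftrightarrow>
     (\<forall>x. 0 \<le> N x) \<and> (\<forall>x. N x = 0 \<longleftrightarrow> x = 0) \<and>
     (\<forall>c x. N (c *s x) = cmod c * N x) \<and> (\<forall>x y. N (x + y) \<le> N x + N y)"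

definition rnorm :: "(complex^'n \<Rightarrow> real) \<Rightarrow> real^'n \<Rightarrow> real" where
  "rnorm N x = N (cvec x)"

definition mat_opnorm :: "(complex^'n \<Rightarrow> real) \<Rightarrow> real^'n^'n \<Rightarrow> real" where
  "mat_opnorm N M = Sup {rnorm N (M *v u) | u. rnorm N u = 1}"

definition rowapp :: "complex^'n \<Rightarrow> real^'n \<Rightarrow> complex" where
  "rowapp w u = (\<Sum>i\<in>UNIV. w $ i * complex_of_real (u $ i))"

definition row_norm :: "(complex^'n \<Rightarrow> real) \<Rightarrow> complex^'n \<Rightarrow> real" where
  "row_norm N w =
     (if is_real_vec w then Sup {cmod (rowapp w u) | u. rnorm N u = 1}
      else Sup {cmod (\<Sum>i\<in>UNIV. w $ i * u $ i) | u. N u = 1})"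

definition normalize_vec :: "(complex^'n \<Rightarrow> real) \<Rightarrow> complex^'n \<Rightarrow> complex^'n" where
  "normalize_vec N x = complex_of_real (1 / N x) *s x"

definition normalize_row :: "(complex^'n \<Rightarrow> real) \<Rightarrow> complex^'n \<Rightarrow> complex^'n" where
  "normalize_row N x = complex_of_real (1 / row_norm N x) *s x"

definition eigenvalues :: "real^'n^'n \<Rightarrow> complex set" where
  "eigenvalues A = {\<mu>. \<exists>x. x \<noteq> 0 \<and> cmat A *v x = \<mu> *s x}"

definition charpoly :: "real^'n^'n \<Rightarrow> complex poly" where
  "charpoly A = det (\<chi> i j. (if i = j then [:0, 1:] else 0) - [: cmat A $ i $ j :])"

definition simple_eig :: "real^'n^'n \<Rightarrow> complex \<Rightarrow> bool" where
  "simple_eig A \<mu> \<longleftrightarrow> \<mu> \<in> eigenvalues A \<and> order \<mu> (charpoly A) = 1"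

text \<open>The class of eigenvalues with real part rho is "real" (one simple real eigenvalue mu)
  or "complex" (exactly the simple pair mu, conj mu with Im mu > 0).\<close>
definition eig_class :: "real^'n^'n \<Rightarrow> real \<Rightarrow> complex \<Rightarrow> bool" where
  "eig_class A \<rho> \<mu> \<longleftrightarrow>
     (let L = {\<nu> \<in> eigenvalues A. Re \<nu> = \<rho>} in
       (L = {\<mu>} \<and> Im \<mu> = 0 \<and> simple_eig A \<mu>) \<or>
       (L = {\<mu>, cnj \<mu>} \<and> Im \<mu> > 0 \<and> simple_eig A \<mu> \<and> simple_eig A (cnj \<mu>)))"

fun matpow :: "real^'n^'n \<Rightarrow> nat \<Rightarrow> real^'n^'n" where
  "matpow M 0 = mat 1"
| "matpow M (Suc k) = M ** matpow M k"

definition mexp :: "real \<Rightarrow> real^'n^'n \<Rightarrow> real^'n^'n" where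
  "mexp t M = (\<chi> i j. (\<Sum>k. (t ^ k / fact k) * (matpow M k $ i $ j)))"

definition Theta_u :: "real \<Rightarrow> complex^'n \<Rightarrow> complex^'n \<Rightarrow> real \<Rightarrow> real^'n \<Rightarrow> real^'n" where
  "Theta_u \<omega> vh wh t u =
     (\<chi> k. cmod (vh $ k) * cos (\<omega> * t + Arg (vh $ k) + Arg (rowapp wh u)))"

definition Theta_m :: "real \<Rightarrow> complex^'n \<Rightarrow> complex^'n \<Rightarrow> real \<Rightarrow> real^'n^'n" where
  "Theta_m \<omega> vh wh t =
     (\<chi> k l. cmod (vh $ k) * cmod (wh $ l) * cos (\<omega> * t + Arg (vh $ k) + Arg (wh $ l)))"

definition fcond :: "(complex^'n \<Rightarrow> real) \<Rightarrow> (nat \<Rightarrow> complex^'n) \<Rightarrow> (nat \<Rightarrow> complex^'n) \<Rightarrow> nat \<Rightarrow> real" where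
  "fcond N w v j = row_norm N (w j) * N (v j)"

definition Thu :: "(complex^'n \<Rightarrow> real) \<Rightarrow> (nat \<Rightarrow> complex) \<Rightarrow> (nat \<Rightarrow> complex^'n) \<Rightarrow> (nat \<Rightarrow> complex^'n)
    \<Rightarrow> nat \<Rightarrow> real \<Rightarrow> real^'n \<Rightarrow> real^'n" where
  "Thu N lam w v j t u = Theta_u (Im (lam j)) (normalize_vec N (v j)) (normalize_row N (w j)) t u"

definition Thm :: "(complex^'n \<Rightarrow> real) \<Rightarrow> (nat \<Rightarrow> complex) \<Rightarrow> (nat \<Rightarrow> complex^'n) \<Rightarrow> (nat \<Rightarrow> complex^'n)
    \<Rightarrow> nat \<Rightarrow> real \<Rightarrow> real^'n^'n" where
  "Thm N lam w v j t = Theta_m (Im (lam j)) (normalize_vec N (v j)) (normalize_row N (w j)) t"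

text \<open>G_j(t,u); the class of Lambda_j is real iff Im (lam j) = 0.\<close>
definition Gu :: "(complex^'n \<Rightarrow> real) \<Rightarrow> (nat \<Rightarrow> complex) \<Rightarrow> (nat \<Rightarrow> complex^'n) \<Rightarrow> (nat \<Rightarrow> complex^'n)
    \<Rightarrow> nat \<Rightarrow> real \<Rightarrow> real^'n \<Rightarrow> real" where
  "Gu N lam w v j t u =
     (if Im (lam j) = 0 \<and> Im (lam 1) = 0 then 1
      else if Im (lam 1) = 0 then 2 * rnorm N (Thu N lam w v j t u)
      else if Im (lam j) = 0 then 1 / (2 * rnorm N (Thu N lam w v 1 t u))
      else rnorm N (Thu N lam w v j t u) / rnorm N (Thu N lam w v 1 t u))"

definition Gm :: "(complex^'n \<Rightarrow> real) \<Rightarrow> (nat \<Rightarrow> complex) \<Rightarrow> (nat \<Rightarrow> complex^'n) \<Rightarrow> (nat \<Rightarrow> complex^'n)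
    \<Rightarrow> nat \<Rightarrow> real \<Rightarrow> real" where
  "Gm N lam w v j t =
     (if Im (lam j) = 0 \<and> Im (lam 1) = 0 then 1
      else if Im (lam 1) = 0 then 2 * mat_opnorm N (Thm N lam w v j t)
      else if Im (lam j) = 0 then 1 / (2 * mat_opnorm N (Thm N lam w v 1 t))
      else mat_opnorm N (Thm N lam w v j t) / mat_opnorm N (Thm N lam w v 1 t))"

definition eps_u :: "(complex^'n \<Rightarrow> real) \<Rightarrow> nat \<Rightarrow> (nat \<Rightarrow> real) \<Rightarrow> (nat \<Rightarrow> complex)
    \<Rightarrow> (nat \<Rightarrow> complex^'n) \<Rightarrow> (nat \<Rightarrow> complex^'n) \<Rightarrow> real \<Rightarrow> real^'n \<Rightarrow> real" where
  "eps_u N q r lam w v t u =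
     (\<Sum>j = 2..q. exp ((r j - r 1) * t) * (fcond N w v j / fcond N w v 1)
        * (cmod (rowapp (normalize_row N (w j)) u) / cmod (rowapp (normalize_row N (w 1)) u))
        * Gu N lam w v j t u)"

definition eps_m :: "(complex^'n \<Rightarrow> real) \<Rightarrow> nat \<Rightarrow> (nat \<Rightarrow> real) \<Rightarrow> (nat \<Rightarrow> complex)
    \<Rightarrow> (nat \<Rightarrow> complex^'n) \<Rightarrow> (nat \<Rightarrow> complex^'n) \<Rightarrow> real \<Rightarrow> real" where
  "eps_m N q r lam w v t =
     (\<Sum>j = 2..q. exp ((r j - r 1) * t) * (fcond N w v j / fcond N w v 1) * Gm N lam w v j t)"

definition Kz :: "(complex^'n \<Rightarrow> real) \<Rightarrow> real^'n^'n \<Rightarrow> real \<Rightarrow> real^'n \<Rightarrow> real^'n \<Rightarrow> real" where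
  "Kz N A t yh zh = rnorm N (mexp t A *v zh) / rnorm N (mexp t A *v yh)"

definition Km :: "(complex^'n \<Rightarrow> real) \<Rightarrow> real^'n^'n \<Rightarrow> real \<Rightarrow> real^'n \<Rightarrow> real" where
  "Km N A t yh = mat_opnorm N (mexp t A) / rnorm N (mexp t A *v yh)"

definition Kinf_z :: "(complex^'n \<Rightarrow> real) \<Rightarrow> (nat \<Rightarrow> complex) \<Rightarrow> (nat \<Rightarrow> complex^'n) \<Rightarrow> (nat \<Rightarrow> complex^'n)
    \<Rightarrow> real \<Rightarrow> real^'n \<Rightarrow> real^'n \<Rightarrow> real" where
  "Kinf_z N lam w v t yh zh =
     (if Im (lam 1) = 0
      then cmod (rowapp (normalize_row N (w 1)) zh) / cmod (rowapp (normalize_row N (w 1)) yh)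
      else cmod (rowapp (normalize_row N (w 1)) zh) / cmod (rowapp (normalize_row N (w 1)) yh)
           * (rnorm N (Thu N lam w v 1 t zh) / rnorm N (Thu N lam w v 1 t yh)))"

definition Kinf_m :: "(complex^'n \<Rightarrow> real) \<Rightarrow> (nat \<Rightarrow> complex) \<Rightarrow> (nat \<Rightarrow> complex^'n) \<Rightarrow> (nat \<Rightarrow> complex^'n)
    \<Rightarrow> real \<Rightarrow> real^'n \<Rightarrow> real" where
  "Kinf_m N lam w v t yh =
     (if Im (lam 1) = 0
      then 1 / cmod (rowapp (normalize_row N (w 1)) yh)
      else 1 / cmod (rowapp (normalize_row N (w 1)) yh)
           * (mat_opnorm N (Thm N lam w v 1 t) / rnorm N (Thu N lam w v 1 t yh)))"

definition approx_prec :: "real \<Rightarrow> real \<Rightarrow> real \<Rightarrow> bool" where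
  "approx_prec a b e \<longleftrightarrow> (\<exists>c. \<bar>c\<bar> \<le> e \<and> a = b * (1 + c))"

end

theory Submission
  imports Defs "HOL-Computational_Algebra.Fundamental_Theorem_Algebra"
begin

lemma poly_det:
  fixes M :: "'a::comm_ring_1 poly^'n^'n"
  shows "poly (det M) z = det (\<chi> i j. poly (M$i$j) z)"
  unfolding det_def by (simp add: poly_sum poly_prod)

lemma poly_charpoly:
  "poly (charpoly A) z = det (\<chi> i j. (if i = j then z else 0) - cmat A $ i $ j)"
  unfolding charpoly_def poly_det by (intro arg_cong[where f=det]) (simp add: vec_eq_iff)

lemma charpoly_root_iff: "poly (charpoly A) z = 0 \<longleftrightarrow> z \<in> eigenvalues A"
proof -
  let ?M = "(\<chi> i j. (if i = j then z else 0) - cmat A $ i $ j)"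
  have mv: "?M *v x = z *s x - cmat A *v x" for x
  proof -
    have "(\<Sum>j\<in>UNIV. (if i = j then z else 0) * x $ j) = z * x $ i" for i
    proof -
      have "(\<Sum>j\<in>UNIV. (if i = j then z else 0) * x $ j) = (\<Sum>j\<in>UNIV. if i = j then z * x $ j else 0)"
        by (intro sum.cong) auto
      then show ?thesis by simp
    qed
    then show ?thesis
      by (simp add: vec_eq_iff matrix_vector_mult_def left_diff_distrib sum_subtractf)
  qed
  have "det ?M = 0 \<longleftrightarrow> \<not> invertible ?M" using invertible_det_nz by blast
  also have "\<dots> \<longleftrightarrow> (\<exists>x. ?M *v x = 0 \<and> x \<noteq> 0)"
    using invertible_left_inverse matrix_left_invertible_ker by blast
  also have "\<dots> \<longleftrightarrow> z \<in> eigenvalues A"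
  proof -
    have "?M *v x = 0 \<longleftrightarrow> cmat A *v x = z *s x" for x
      unfolding mv by (metis eq_iff_diff_eq_0)
    then show ?thesis unfolding eigenvalues_def by blast
  qed
  finally show ?thesis by (simp add: poly_charpoly)
qed


lemma degree_charpoly:
  fixes A :: "real^'n^'n"
  shows "degree (charpoly A) = CARD('n)"
proof -
  define M :: "complex poly^'n^'n" where "M = (\<chi> i j. (if i = j then [:0, 1:] else 0) - [: cmat A $ i $ j :])"
  define P where "P = {p. p permutes (UNIV::'n set)}"
  define T where "T p = of_int (sign p) * (\<Prod>i\<in>UNIV. M$i$p i)" for p
  have fin: "finite P" unfolding P_def by (simp add: finite_permutations)
  have idP: "id \<in> P" unfolding P_def by (simp add: permutes_id)
  have cp: "charpoly A = T id + (\<Sum>p\<in>P - {id}. T p)"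
    unfolding charpoly_def det_def M_def[symmetric] T_def[symmetric] P_def[symmetric]
    using fin idP by (simp add: sum.remove)
  have Mii: "M$i$i = [:- cmat A $ i $ i, 1:]" for i
    by (simp add: M_def)
  have Mij: "i \<noteq> j \<Longrightarrow> degree (M$i$j) = 0" for i j
    by (simp add: M_def)
  have Mle: "degree (M$i$j) \<le> 1" for i j
    by (cases "i = j") (simp_all add: Mii Mij)
  have Tid: "T id = (\<Prod>i\<in>UNIV. [:- cmat A $ i $ i, 1:])"
    by (simp add: T_def sign_id Mii)
  have dTid: "degree (T id) = CARD('n)"
    unfolding Tid by (subst degree_prod_sum_eq) auto
  have dT: "degree (T p) \<le> CARD('n) - 1" if "p \<in> P - {id}" for p
  proof -
    from that obtain i0 where i0: "p i0 \<noteq> i0" by (auto simp: fun_eq_iff)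
    have "degree (T p) \<le> degree (of_int (sign p) :: complex poly) + degree (\<Prod>i\<in>UNIV. M$i$p i)"
      unfolding T_def by (rule degree_mult_le)
    also have "\<dots> = degree (\<Prod>i\<in>UNIV. M$i$p i)" by simp
    also have "\<dots> \<le> (\<Sum>i\<in>UNIV. degree (M$i$p i))"
      using degree_prod_sum_le[of UNIV "\<lambda>i. M$i$p i"] by (simp add: o_def)
    also have "\<dots> \<le> (\<Sum>i\<in>UNIV. if i = i0 then 0 else 1)"
      by (intro sum_mono) (use i0 Mij Mle in auto)
    also have "\<dots> = CARD('n) - 1"
      by (simp add: sum.If_cases Compl_eq_Diff_UNIV card_Diff_singleton)
    finally show ?thesis .
  qed
  have "degree (\<Sum>p\<in>P - {id}. T p) \<le> CARD('n) - 1"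
    by (rule degree_sum_le) (use fin dT in auto)
  also have "\<dots> < degree (T id)" unfolding dTid by simp
  finally show ?thesis unfolding cp by (subst degree_add_eq_left) (simp_all add: dTid)
qed


lemma card_eigenvalues:
  fixes A :: "real^'n^'n"
  assumes "\<forall>\<mu>\<in>eigenvalues A. order \<mu> (charpoly A) = 1"
  shows "finite (eigenvalues A) \<and> card (eigenvalues A) = CARD('n)"
proof -
  let ?p = "charpoly A"
  have p0: "?p \<noteq> 0" using degree_charpoly[of A] by (metis degree_0 zero_less_card_finite less_irrefl)
  have Z: "{z. poly ?p z = 0} = eigenvalues A" using charpoly_root_iff by blast
  have fin: "finite (eigenvalues A)" using poly_roots_finite[OF p0] Z by simp
  have "?p = smult (lead_coeff ?p) (\<Prod>z|poly ?p z = 0. [:-z, 1:] ^ order z ?p)"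
    by (rule complex_poly_decompose[symmetric])
  also have "\<dots> = smult (lead_coeff ?p) (\<Prod>z\<in>eigenvalues A. [:-z, 1:])"
    unfolding Z using assms by (intro arg_cong[where f="smult _"] prod.cong) auto
  finally have "degree ?p = degree (smult (lead_coeff ?p) (\<Prod>z\<in>eigenvalues A. [:-z, 1:]))"
    by simp
  also have "\<dots> = card (eigenvalues A)"
    using p0 by (simp add: degree_prod_sum_eq)
  finally show ?thesis using fin degree_charpoly[of A] by simp
qed

lemma cmat_mult: "cmat (A ** B) = cmat A ** cmat B"
  by (simp add: cmat_def vec_eq_iff matrix_matrix_mult_def)

lemma mat_vec_smult: "(M::'a::comm_ring_1^'n^'m) *v (c *s x) = c *s (M *v x)"
  by (simp add: vec_eq_iff matrix_vector_mult_def sum_distrib_left algebra_simps)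

lemma cmat_matpow_eig:
  assumes "cmat A *v x = \<mu> *s x"
  shows "cmat (matpow A k) *v x = \<mu>^k *s x"
proof (induction k)
  case 0
  have "cmat (mat 1 :: real^'a^'a) = mat 1" by (simp add: cmat_def mat_def vec_eq_iff)
  then show ?case by simp
next
  case (Suc k)
  then show ?case
    by (simp add: cmat_mult matrix_vector_mul_assoc[symmetric] mat_vec_smult assms)
qed

lemma matpow_bound:
  fixes A :: "real^'n^'n"
  defines "Mb \<equiv> (\<Sum>i\<in>UNIV. \<Sum>j\<in>UNIV. \<bar>A$i$j\<bar>)"
  shows "\<bar>matpow A k $ i $ j\<bar> \<le> Mb ^ k"
proof (induction k arbitrary: i j)
  case 0
  then show ?case by (simp add: mat_def)
next
  case (Suc k)
  have Mb0: "0 \<le> Mb" unfolding Mb_def by (intro sum_nonneg) auto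
  have rowle: "(\<Sum>l\<in>UNIV. \<bar>A$i$l\<bar>) \<le> Mb"
    unfolding Mb_def by (rule member_le_sum) (auto intro: sum_nonneg)
  have "\<bar>matpow A (Suc k) $ i $ j\<bar> = \<bar>\<Sum>l\<in>UNIV. A$i$l * matpow A k $ l $ j\<bar>"
    by (simp add: matrix_matrix_mult_def)
  also have "\<dots> \<le> (\<Sum>l\<in>UNIV. \<bar>A$i$l\<bar> * Mb^k)"
    by (rule order_trans[OF sum_abs]) (auto intro!: sum_mono simp: abs_mult intro: mult_left_mono Suc)
  also have "\<dots> = (\<Sum>l\<in>UNIV. \<bar>A$i$l\<bar>) * Mb^k" by (simp add: sum_distrib_right)
  also have "\<dots> \<le> Mb * Mb^k" using rowle by (rule mult_right_mono) (simp add: Mb0)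
  finally show ?case by simp
qed

lemma summable_mexp:
  fixes A :: "real^'n^'n"
  shows "summable (\<lambda>k. (t ^ k / fact k) * (matpow A k $ i $ j))"
proof -
  define Mb where "Mb = (\<Sum>i\<in>UNIV. \<Sum>j\<in>UNIV. \<bar>A$i$j\<bar>)"
  have "summable (\<lambda>k. inverse (fact k) * (\<bar>t\<bar> * Mb)^k)" by (rule summable_exp)
  then show ?thesis
  proof (rule summable_comparison_test'[where N=0])
    fix k :: nat
    have "norm ((t ^ k / fact k) * (matpow A k $ i $ j)) = \<bar>t\<bar>^k / fact k * \<bar>matpow A k $ i $ j\<bar>"
      by (simp add: abs_mult power_abs)
    also have "\<dots> \<le> \<bar>t\<bar>^k / fact k * Mb^k"
      using matpow_bound[of A k i j] unfolding Mb_def by (intro mult_left_mono) auto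
    also have "\<dots> = inverse (fact k) * (\<bar>t\<bar> * Mb)^k" by (simp add: power_mult_distrib field_simps)
    finally show "norm ((t ^ k / fact k) * (matpow A k $ i $ j)) \<le> inverse (fact k) * (\<bar>t\<bar> * Mb)^k" .
  qed
qed

lemma mexp_eig:
  fixes A :: "real^'n^'n"
  assumes "cmat A *v x = \<mu> *s x"
  shows "cmat (mexp t A) *v x = exp (of_real t * \<mu>) *s x"
proof -
  define c where "c k = (t ^ k / fact k)" for k :: nat
  have "(cmat (mexp t A) *v x) $ i = exp (of_real t * \<mu>) * x $ i" for i
  proof -
    have s1: "(\<lambda>k. complex_of_real (c k * matpow A k $ i $ j) * x $ j) sums
              (complex_of_real (mexp t A $ i $ j) * x $ j)" for j
    proof -
      have "mexp t A $ i $ j = (\<Sum>k. c k * matpow A k $ i $ j)" by (simp add: mexp_def c_def)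
      then have "(\<lambda>k. c k * matpow A k $ i $ j) sums (mexp t A $ i $ j)"
        using summable_sums[OF summable_mexp[of t A i j, folded c_def]] by simp
      then show ?thesis by (intro sums_mult2 sums_of_real)
    qed
    have "(\<lambda>k. \<Sum>j\<in>UNIV. complex_of_real (c k * matpow A k $ i $ j) * x $ j) sums
              (\<Sum>j\<in>UNIV. complex_of_real (mexp t A $ i $ j) * x $ j)"
      by (rule sums_sum) (rule s1)
    moreover have "(\<Sum>j\<in>UNIV. complex_of_real (c k * matpow A k $ i $ j) * x $ j)
        = complex_of_real (c k) * \<mu>^k * x $ i" for k
    proof -
      have "(\<Sum>j\<in>UNIV. complex_of_real (c k * matpow A k $ i $ j) * x $ j)
          = complex_of_real (c k) * (cmat (matpow A k) *v x) $ i"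
        by (simp add: matrix_vector_mult_def cmat_def sum_distrib_left mult.assoc)
      also have "\<dots> = complex_of_real (c k) * \<mu>^k * x $ i"
        using cmat_matpow_eig[OF assms, of k] by simp
      finally show ?thesis .
    qed
    ultimately have A1: "(\<lambda>k. complex_of_real (c k) * \<mu>^k * x $ i) sums
              (\<Sum>j\<in>UNIV. complex_of_real (mexp t A $ i $ j) * x $ j)" by simp
    have "(\<lambda>k. (of_real t * \<mu>)^k /\<^sub>R fact k * x $ i) sums (exp (of_real t * \<mu>) * x $ i)"
      by (intro sums_mult2 exp_converges)
    moreover have "(of_real t * \<mu>)^k /\<^sub>R fact k * x $ i = complex_of_real (c k) * \<mu>^k * x $ i" for k
      by (simp add: c_def scaleR_conv_of_real power_mult_distrib field_simps)
    ultimately have A2: "(\<lambda>k. complex_of_real (c k) * \<mu>^k * x $ i) sums (exp (of_real t * \<mu>) * x $ i)"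
      by simp
    show ?thesis using sums_unique2[OF A1 A2]
      by (simp add: matrix_vector_mult_def cmat_def)
  qed
  then show ?thesis by (simp add: vec_eq_iff)
qed

definition vconj :: "complex^'n \<Rightarrow> complex^'n" where
  "vconj x = (\<chi> i. cnj (x $ i))"

definition dotc :: "complex^'n \<Rightarrow> complex^'n \<Rightarrow> complex" where
  "dotc w x = (\<Sum>i\<in>UNIV. w $ i * x $ i)"

lemma dotc_vm: "dotc (w v* B) x = dotc w (B *v x)"
proof -
  have "dotc (w v* B) x = (\<Sum>j\<in>UNIV. \<Sum>i\<in>UNIV. B$i$j * w$i * x$j)"
    by (simp add: dotc_def vector_matrix_mult_def sum_distrib_right sum_distrib_left mult_ac)
  also have "\<dots> = (\<Sum>i\<in>UNIV. \<Sum>j\<in>UNIV. B$i$j * w$i * x$j)"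
    by (rule sum.swap)
  also have "\<dots> = dotc w (B *v x)"
    by (simp add: dotc_def matrix_vector_mult_def sum_distrib_left mult_ac)
  finally show ?thesis .
qed

lemma biorth:
  assumes "w v* B = a *s w" "B *v x = b *s x" "a \<noteq> b"
  shows "dotc w x = 0"
proof -
  have "a * dotc w x = b * dotc w x"
    using dotc_vm[of w B x] assms(1,2) by (simp add: dotc_def sum_distrib_left mult_ac)
  then show ?thesis using assms(3) by simp
qed

lemma vconj_mv: "cmat A *v vconj x = vconj (cmat A *v x)"
  by (simp add: vec_eq_iff vconj_def cmat_def matrix_vector_mult_def)

lemma vconj_vm: "vconj x v* cmat A = vconj (x v* cmat A)"
  by (simp add: vec_eq_iff vconj_def cmat_def vector_matrix_mult_def)

lemma vconj_smult: "vconj (c *s x) = cnj c *s vconj x"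
  by (simp add: vec_eq_iff vconj_def)

lemma dotc_vconj: "dotc (vconj w) (vconj x) = cnj (dotc w x)"
  by (simp add: dotc_def vconj_def)

lemma vconj_eq_0: "vconj x = 0 \<longleftrightarrow> x = 0"
  by (simp add: vec_eq_iff vconj_def)

lemma dual_basis_decomp:
  fixes I :: "'k set" and ww vv :: "'k \<Rightarrow> complex^'n"
  assumes fin: "finite I" and card: "card I = CARD('n)"
    and orth: "\<And>a b. a \<in> I \<Longrightarrow> b \<in> I \<Longrightarrow> dotc (ww a) (vv b) = (if a = b then 1 else 0)"
  shows "x = (\<Sum>a\<in>I. dotc (ww a) x *s vv a)"
proof -
  obtain e where e: "bij_betw e (UNIV::'n set) I"
    using finite_same_card_bij[of "UNIV::'n set" I] fin card by auto
  have einj: "e i = e i' \<longleftrightarrow> i = i'" for i i'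
    using e by (auto simp: bij_betw_def inj_on_def)
  have eI: "e i \<in> I" for i using e by (auto simp: bij_betw_def)
  define W :: "complex^'n^'n" where "W = (\<chi> i l. ww (e i) $ l)"
  define V :: "complex^'n^'n" where "V = (\<chi> k i. vv (e i) $ k)"
  have "W ** V = mat 1"
  proof -
    have "(W ** V) $ i $ i' = (if i = i' then 1 else 0)" for i i'
      using orth[OF eI eI, of i i'] by (simp add: W_def V_def matrix_matrix_mult_def dotc_def einj)
    then show ?thesis by (simp add: vec_eq_iff mat_def)
  qed
  then have VW: "V ** W = mat 1" using matrix_left_right_inverse by blast
  have "x = (V ** W) *v x" by (simp add: VW)
  also have "\<dots> = V *v (W *v x)" by (simp add: matrix_vector_mul_assoc)
  also have "\<dots> = (\<Sum>i\<in>UNIV. dotc (ww (e i)) x *s vv (e i))"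
    by (simp add: vec_eq_iff V_def W_def matrix_vector_mult_def dotc_def sum_component mult_ac)
  also have "\<dots> = (\<Sum>a\<in>I. dotc (ww a) x *s vv a)"
    by (rule sum.reindex_bij_betw[OF e])
  finally show ?thesis .
qed

lemma mv_sum: "(M::'a::comm_ring_1^'n^'m) *v (\<Sum>a\<in>S. f a) = (\<Sum>a\<in>S. M *v f a)"
proof (induction S rule: infinite_finite_induct)
  case (insert x F)
  then show ?case by (simp add: matrix_vector_right_distrib)
qed (auto simp: vec_eq_iff matrix_vector_mult_def)

lemma cvec_mv: "cvec (M *v u) = cmat M *v cvec u"
  by (simp add: vec_eq_iff cvec_def cmat_def matrix_vector_mult_def)

lemma cvec_sum: "cvec (\<Sum>a\<in>S. f a) = (\<Sum>a\<in>S. cvec (f a))"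
  by (induction S rule: infinite_finite_induct) (auto simp: vec_eq_iff cvec_def)

lemma cvec_inj: "cvec x = cvec y \<longleftrightarrow> x = y"
  by (simp add: vec_eq_iff cvec_def)

lemma dotc_cvec: "dotc w (cvec u) = rowapp w u"
  by (simp add: dotc_def rowapp_def cvec_def)

lemma vconj_cvec: "vconj (cvec u) = cvec u"
  by (simp add: vec_eq_iff vconj_def cvec_def)

lemma real_vec_cvec: "(\<forall>k. Im (x$k) = 0) \<Longrightarrow> x = cvec (\<chi> k. Re (x$k))"
  by (simp add: vec_eq_iff cvec_def complex_eq_iff)

lemma plus_vconj: "x + vconj x = cvec (\<chi> k. 2 * Re (x$k))"
  by (simp add: vec_eq_iff cvec_def vconj_def complex_eq_iff)

locale spec =
  fixes A :: "real^'n^'n" and N :: "complex^'n \<Rightarrow> real"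
    and q :: nat and r :: "nat \<Rightarrow> real" and lam :: "nat \<Rightarrow> complex"
    and w v :: "nat \<Rightarrow> complex^'n"
  assumes norm: "is_cnorm N"
    and real_parts: "Re ` eigenvalues A = r ` {1..q}"
    and r_decr: "\<forall>i\<in>{1..q}. \<forall>j\<in>{1..q}. i < j \<longrightarrow> r j < r i"
    and classes: "\<forall>j\<in>{1..q}. eig_class A (r j) (lam j)"
    and eigvecs: "\<forall>j\<in>{1..q}.
         w j \<noteq> 0 \<and> w j v* cmat A = lam j *s w j \<and>
         v j \<noteq> 0 \<and> cmat A *v v j = lam j *s v j \<and>
         (\<Sum>i\<in>UNIV. w j $ i * v j $ i) = 1 \<and>
         (Im (lam j) = 0 \<longrightarrow> is_real_vec (w j) \<and> is_real_vec (v j))"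
begin

lemma class_facts:
  assumes "j \<in> {1..q}"
  shows "lam j \<in> eigenvalues A" "Re (lam j) = r j" "order (lam j) (charpoly A) = 1"
    "Im (lam j) \<noteq> 0 \<Longrightarrow> Im (lam j) > 0"
    "Im (lam j) \<noteq> 0 \<Longrightarrow> cnj (lam j) \<in> eigenvalues A"
    "Im (lam j) \<noteq> 0 \<Longrightarrow> order (cnj (lam j)) (charpoly A) = 1"
    "{\<nu> \<in> eigenvalues A. Re \<nu> = r j} \<subseteq> {lam j, cnj (lam j)}"
  using classes assms unfolding eig_class_def simple_eig_def Let_def
  by (auto simp: set_eq_iff; metis)+

lemma r_inj: "i \<in> {1..q} \<Longrightarrow> j \<in> {1..q} \<Longrightarrow> r i = r j \<Longrightarrow> i = j"
  using r_decr by (metis less_irrefl linorder_neqE_nat)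

lemma eig_cover:
  assumes "e \<in> eigenvalues A"
  shows "\<exists>j\<in>{1..q}. e = lam j \<or> (Im (lam j) \<noteq> 0 \<and> e = cnj (lam j))"
proof -
  from assms real_parts obtain j where j: "j \<in> {1..q}" "Re e = r j" by force
  with class_facts(7)[OF j(1)] assms have "e = lam j \<or> e = cnj (lam j)" by auto
  then show ?thesis using j by (cases "Im (lam j) = 0") (auto simp: complex_eq_iff)
qed

lemma all_simple: "\<forall>e\<in>eigenvalues A. order e (charpoly A) = 1"
  using eig_cover class_facts by (metis complex_cnj_cancel_iff)

lemma card_eig: "finite (eigenvalues A)" "card (eigenvalues A) = CARD('n)"
  using card_eigenvalues[OF all_simple] by auto

lemma q_pos: "1 \<le> q"
proof -
  have "eigenvalues A \<noteq> {}" using card_eig by auto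
  then obtain e where "e \<in> eigenvalues A" by auto
  then show ?thesis using eig_cover by fastforce
qed

definition "I = {(j,b). j \<in> {1..q} \<and> (b \<longrightarrow> Im (lam j) \<noteq> 0)}"
definition "mu = (\<lambda>(j,b). if b then cnj (lam j) else lam j)"
definition "vv = (\<lambda>(j,b). if b then vconj (v j) else v j)"
definition "ww = (\<lambda>(j,b). if b then vconj (w j) else w j)"

lemma I_fin: "finite I"
proof -
  have "I \<subseteq> {1..q} \<times> UNIV" by (auto simp: I_def)
  then show ?thesis by (rule finite_subset) auto
qed

lemma mu_inj: "inj_on mu I"
proof
  fix a b assume a: "a \<in> I" and b: "b \<in> I" and eq: "mu a = mu b"
  obtain j1 b1 where a1: "a = (j1, b1)" by force
  obtain j2 b2 where b2: "b = (j2, b2)" by force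
  have j1: "j1 \<in> {1..q}" and j2: "j2 \<in> {1..q}" using a b a1 b2 by (auto simp: I_def)
  have "Re (mu a) = r j1" "Re (mu b) = r j2"
    using class_facts(2)[OF j1] class_facts(2)[OF j2] a1 b2 by (auto simp: mu_def)
  then have "j1 = j2" using eq r_inj j1 j2 by metis
  moreover have "b1 = b2"
  proof (rule ccontr)
    assume "b1 \<noteq> b2"
    then have "lam j1 = cnj (lam j1)" "Im (lam j1) \<noteq> 0"
      using eq a b a1 b2 \<open>j1 = j2\<close> by (auto simp: mu_def I_def split: if_splits)
    then show False by (metis cnj.simps(2) neg_equal_zero)
  qed
  ultimately show "a = b" using a1 b2 by simp
qed

lemma mu_img: "mu ` I = eigenvalues A"
proof
  show "mu ` I \<subseteq> eigenvalues A"
    using class_facts(1,5) by (auto simp: I_def mu_def)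
  show "eigenvalues A \<subseteq> mu ` I"
  proof
    fix e assume "e \<in> eigenvalues A"
    from eig_cover[OF this] obtain j where j: "j \<in> {1..q}"
      and "e = lam j \<or> (Im (lam j) \<noteq> 0 \<and> e = cnj (lam j))" by blast
    then show "e \<in> mu ` I"
      by (auto simp: I_def mu_def image_iff intro: bexI[of _ "(j,False)"] bexI[of _ "(j,True)"])
  qed
qed

lemma card_I: "card I = CARD('n)"
  using card_inj_on_le mu_inj mu_img card_eig by (metis card_image)

lemma eig_vv: "a \<in> I \<Longrightarrow> cmat A *v vv a = mu a *s vv a"
  using eigvecs by (auto simp: I_def vv_def mu_def vconj_mv vconj_smult)

lemma eig_ww: "a \<in> I \<Longrightarrow> ww a v* cmat A = mu a *s ww a"
  using eigvecs by (auto simp: I_def ww_def mu_def vconj_vm vconj_smult)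

lemma norm_wv: "a \<in> I \<Longrightarrow> dotc (ww a) (vv a) = 1"
  using eigvecs by (auto simp: I_def ww_def vv_def dotc_vconj) (auto simp: dotc_def)

lemma orth:
  assumes a: "a \<in> I" and b: "b \<in> I"
  shows "dotc (ww a) (vv b) = (if a = b then 1 else 0)"
proof (cases "a = b")
  case True
  then show ?thesis using norm_wv a by simp
next
  case False
  then have "mu a \<noteq> mu b" using mu_inj a b by (auto simp: inj_on_def)
  then show ?thesis using biorth[OF eig_ww[OF a] eig_vv[OF b]] False by simp
qed

lemma decomp: "x = (\<Sum>a\<in>I. dotc (ww a) x *s vv a)"
  by (rule dual_basis_decomp[OF I_fin card_I orth])

lemma mexp_decomp_c:
  "cmat (mexp t A) *v x = (\<Sum>a\<in>I. (dotc (ww a) x * exp (of_real t * mu a)) *s vv a)"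
proof -
  have "cmat (mexp t A) *v x = (\<Sum>a\<in>I. cmat (mexp t A) *v (dotc (ww a) x *s vv a))"
    by (subst decomp[of x]) (rule mv_sum)
  also have "\<dots> = (\<Sum>a\<in>I. (dotc (ww a) x * exp (of_real t * mu a)) *s vv a)"
    by (intro sum.cong refl) (simp add: mat_vec_smult mexp_eig[OF eig_vv] vector_smult_assoc mult_ac)
  finally show ?thesis .
qed

definition Cj :: "real \<Rightarrow> nat \<Rightarrow> real^'n \<Rightarrow> real^'n" where
  "Cj t j u = (\<chi> k. (if Im (lam j) = 0 then 1 else 2) *
       Re (exp (of_real t * lam j) * rowapp (w j) u * v j $ k))"

lemma sum_I: "(\<Sum>a\<in>I. F a) = (\<Sum>j\<in>{1..q}. F (j,False) + (if Im (lam j) \<noteq> 0 then F (j,True) else 0))"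
proof -
  have "I = Sigma {1..q} (\<lambda>j. if Im (lam j) \<noteq> 0 then UNIV else {False})"
    by (auto simp: I_def split: if_splits)
  then have "(\<Sum>a\<in>I. F a) = (\<Sum>j\<in>{1..q}. \<Sum>b\<in>(if Im (lam j) \<noteq> 0 then UNIV else {False}). F (j,b))"
    by (simp add: sum.Sigma)
  also have "\<dots> = (\<Sum>j\<in>{1..q}. F (j,False) + (if Im (lam j) \<noteq> 0 then F (j,True) else 0))"
    by (intro sum.cong refl) (simp add: UNIV_bool)
  finally show ?thesis .
qed

lemma mexp_decomp: "mexp t A *v u = (\<Sum>j\<in>{1..q}. Cj t j u)"
proof -
  define F where "F a = (dotc (ww a) (cvec u) * exp (of_real t * mu a)) *s vv a" for a
  have "cvec (mexp t A *v u) = (\<Sum>a\<in>I. F a)"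
    unfolding cvec_mv mexp_decomp_c F_def ..
  also have "\<dots> = (\<Sum>j\<in>{1..q}. cvec (Cj t j u))"
    unfolding sum_I
  proof (intro sum.cong refl)
    fix j assume j: "j \<in> {1..q}"
    have ec: "exp (complex_of_real t * cnj (lam j)) = cnj (exp (complex_of_real t * lam j))"
      by (simp add: exp_cnj)
    have FT: "F (j,True) = vconj (F (j,False))"
      by (simp add: ec  F_def ww_def vv_def mu_def vconj_smult dotc_vconj[symmetric] vconj_cvec exp_cnj[symmetric])
    have FF: "F (j,False) = (\<chi> k. exp (of_real t * lam j) * rowapp (w j) u * v j $ k)"
      by (simp add: F_def ww_def vv_def mu_def dotc_cvec vec_eq_iff mult_ac)
    show "F (j,False) + (if Im (lam j) \<noteq> 0 then F (j,True) else 0) = cvec (Cj t j u)"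
    proof (cases "Im (lam j) = 0")
      case True
      with eigvecs j have rv: "is_real_vec (w j)" "is_real_vec (v j)" by auto
      have ra: "Im (rowapp (w j) u) = 0"
        using rv(1) by (simp add: rowapp_def is_real_vec_def Im_sum)
      have "Im (exp (of_real t * lam j)) = 0"
        using True by (simp add: exp_eq_polar cis.sel)
      then have "\<forall>k. Im (F (j,False) $ k) = 0"
        using ra rv(2) unfolding FF by (simp add: is_real_vec_def)
      then have "F (j,False) = cvec (\<chi> k. Re (F (j,False) $ k))" by (rule real_vec_cvec)
      then show ?thesis using True by (simp add: Cj_def FF)
    next
      case False
      then show ?thesis using plus_vconj[of "F (j,False)"] by (simp add: FT Cj_def FF)
    qed
  qed
  also have "\<dots> = cvec (\<Sum>j\<in>{1..q}. Cj t j u)" by (simp add: cvec_sum)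
  finally show ?thesis by (simp add: cvec_inj)
qed

end

context
  fixes N :: "complex^'n \<Rightarrow> real"
  assumes N: "is_cnorm N"
begin

lemma N_nonneg: "0 \<le> N x" using N by (simp add: is_cnorm_def)
lemma N_zero_iff: "N x = 0 \<longleftrightarrow> x = 0" using N by (simp add: is_cnorm_def)
lemma N_scale: "N (c *s x) = cmod c * N x" using N by (simp add: is_cnorm_def)
lemma N_tri: "N (x + y) \<le> N x + N y" using N by (simp add: is_cnorm_def)
lemma N_0: "N 0 = 0" using N_zero_iff by simp
lemma N_pos: "x \<noteq> 0 \<Longrightarrow> 0 < N x" using N_nonneg N_zero_iff by (metis less_eq_real_def)
lemma N_minus: "N (- x) = N x"
  using N_scale[of "-1" x] by simp
lemma N_sum: "N (\<Sum>a\<in>S. f a) \<le> (\<Sum>a\<in>S. N (f a))"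
proof (induction S rule: infinite_finite_induct)
  case (insert x F)
  then show ?case using N_tri[of "f x" "sum f F"] by simp
qed (auto simp: N_0)

lemma scaleR_vec_s: "r *\<^sub>R (x::complex^'n) = complex_of_real r *s x"
  by (simp add: vec_eq_iff of_real_def)

lemma N_scaleR: "N (r *\<^sub>R x) = \<bar>r\<bar> * N x"
  by (simp add: scaleR_vec_s N_scale)

lemma N_upper: "\<exists>B\<ge>0. \<forall>x. N x \<le> B * norm x"
proof -
  define B where "B = (\<Sum>i\<in>UNIV. N (axis i 1 :: complex^'n))"
  have B0: "0 \<le> B" unfolding B_def by (intro sum_nonneg N_nonneg)
  have "N x \<le> B * norm x" for x
  proof -
    have "N x = N (\<Sum>i\<in>UNIV. x$i *s axis i 1)" by (simp add: basis_expansion)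
    also have "\<dots> \<le> (\<Sum>i\<in>UNIV. N (x$i *s axis i 1))" by (rule N_sum)
    also have "\<dots> = (\<Sum>i\<in>UNIV. cmod (x$i) * N (axis i 1))" by (simp add: N_scale)
    also have "\<dots> \<le> (\<Sum>i\<in>UNIV. norm x * N (axis i 1))"
      by (intro sum_mono mult_right_mono N_nonneg Finite_Cartesian_Product.norm_nth_le)
    also have "\<dots> = B * norm x" by (simp add: B_def sum_distrib_left mult_ac)
    finally show ?thesis .
  qed
  then show ?thesis using B0 by blast
qed

lemma N_cont: "continuous_on S N"
proof -
  obtain B where B: "B \<ge> 0" "\<And>x. N x \<le> B * norm x" using N_upper by blast
  have "B-lipschitz_on S N"
  proof (rule lipschitz_onI[OF _ B(1)])
    fix x y
    have "N x \<le> N y + N (x - y)" using N_tri[of y "x - y"] by simp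
    moreover have "N y \<le> N x + N (y - x)" using N_tri[of x "y - x"] by simp
    moreover have "N (y - x) = N (x - y)" using N_minus[of "x - y"] by simp
    ultimately have "\<bar>N x - N y\<bar> \<le> N (x - y)" by linarith
    also have "\<dots> \<le> B * dist x y" using B(2) by (simp add: dist_norm)
    finally show "dist (N x) (N y) \<le> B * dist x y" by (simp add: dist_real_def)
  qed
  then show ?thesis by (rule lipschitz_on_continuous_on)
qed

lemma N_lower: "\<exists>C>0. \<forall>x. norm x \<le> C * N x"
proof -
  have "sphere (0::complex^'n) 1 \<noteq> {}" by simp
  then obtain x0 where x0: "x0 \<in> sphere (0::complex^'n) 1" and
    mn: "\<forall>y\<in>sphere 0 1. N x0 \<le> N y"
    using continuous_attains_inf[OF compact_sphere _ N_cont] by blast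
  have "x0 \<noteq> 0" using x0 by auto
  then have m0: "N x0 > 0" by (rule N_pos)
  have "norm x \<le> (1 / N x0) * N x" for x
  proof (cases "x = 0")
    case False
    have "(1 / norm x) *\<^sub>R x \<in> sphere 0 1" using False by simp
    then have "N x0 \<le> N ((1 / norm x) *\<^sub>R x)" using mn by blast
    also have "\<dots> = N x / norm x" by (simp add: N_scaleR)
    finally show ?thesis using m0 False by (simp add: field_simps)
  qed (simp add: N_0)
  then show ?thesis using m0 by (intro exI[of _ "1 / N x0"]) auto
qed

lemma cvec_add: "cvec (x + y) = cvec x + cvec y" by (simp add: vec_eq_iff cvec_def)
lemma cvec_scaleR: "cvec (c *\<^sub>R x) = c *\<^sub>R cvec x" by (simp add: vec_eq_iff cvec_def of_real_def)
lemma cvec_minus: "cvec (- x) = - cvec x" by (simp add: vec_eq_iff cvec_def)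
lemma cvec_zero: "cvec 0 = 0" by (simp add: vec_eq_iff cvec_def)
lemma norm_cvec: "norm (cvec x) = norm x" by (simp add: norm_vec_def cvec_def)

lemma rn_nonneg: "0 \<le> rnorm N x" by (simp add: rnorm_def N_nonneg)
lemma rn_zero_iff: "rnorm N x = 0 \<longleftrightarrow> x = 0"
  by (simp add: rnorm_def N_zero_iff flip: cvec_zero cvec_inj)
lemma rn_pos: "x \<noteq> 0 \<Longrightarrow> 0 < rnorm N x" using rn_nonneg rn_zero_iff by (metis less_eq_real_def)
lemma rn_tri: "rnorm N (x + y) \<le> rnorm N x + rnorm N y" by (simp add: rnorm_def cvec_add N_tri)
lemma rn_scale: "rnorm N (c *\<^sub>R x) = \<bar>c\<bar> * rnorm N x" by (simp add: rnorm_def cvec_scaleR N_scaleR)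
lemma rn_minus: "rnorm N (- x) = rnorm N x" by (simp add: rnorm_def cvec_minus N_minus)
lemma rn_sum: "rnorm N (\<Sum>a\<in>S. f a) \<le> (\<Sum>a\<in>S. rnorm N (f a))" by (simp add: rnorm_def cvec_sum N_sum)
lemma rn_lower: "\<exists>C>0. \<forall>x. norm x \<le> C * rnorm N x"
  using N_lower by (metis rnorm_def norm_cvec)
lemma rn_upper: "\<exists>B\<ge>0. \<forall>x. rnorm N x \<le> B * norm x"
  using N_upper by (metis rnorm_def norm_cvec)

lemma rn_unit_ex: "\<exists>u. rnorm N u = 1"
proof -
  have "(axis undefined 1 :: real^'n) \<noteq> 0" by (simp add: axis_eq_0_iff)
  then have p: "rnorm N (axis undefined 1 :: real^'n) > 0" by (rule rn_pos)
  show ?thesis by (rule exI[of _ "(1 / rnorm N (axis undefined 1 :: real^'n)) *\<^sub>R axis undefined 1"])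
     (use p in \<open>simp add: rn_scale\<close>)
qed

end

lemma mv_scaleR: "(c *\<^sub>R M) *v u = c *\<^sub>R (M *v (u::real^'n))"
  by (simp add: vec_eq_iff matrix_vector_mult_def sum_distrib_left mult_ac)

context
  fixes N :: "complex^'n \<Rightarrow> real"
  assumes N: "is_cnorm N"
begin

lemma opn_bdd: "bdd_above {rnorm N (M *v u) | u. rnorm N u = 1}"
proof -
  obtain C where C: "C > 0" "\<And>x. norm x \<le> C * rnorm N x" using rn_lower[OF N] by blast
  obtain B where B: "B \<ge> 0" "\<And>x. rnorm N x \<le> B * norm x" using rn_upper[OF N] by blast
  obtain K where K: "K > 0" "\<And>x. norm (M *v x) \<le> norm x * K"
    using bounded_linear.pos_bounded[OF matrix_vector_mul_bounded_linear[of M]] by blast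
  have "rnorm N (M *v u) \<le> B * K * C" if "rnorm N u = 1" for u
  proof -
    have "rnorm N (M *v u) \<le> B * norm (M *v u)" by (rule B(2))
    also have "\<dots> \<le> B * (norm u * K)" using B(1) K(2) by (rule mult_left_mono[rotated])
    also have "\<dots> \<le> B * (C * K)"
      using C(2)[of u] that B(1) K(1) by (intro mult_left_mono mult_right_mono) auto
    finally show ?thesis by (simp add: mult_ac)
  qed
  then show ?thesis by (auto simp: bdd_above_def)
qed

lemma opn_ne: "{rnorm N (M *v u) | u. rnorm N u = 1} \<noteq> {}"
  using rn_unit_ex[OF N] by auto

lemma opn_ge: "rnorm N u = 1 \<Longrightarrow> rnorm N (M *v u) \<le> mat_opnorm N M"
  unfolding mat_opnorm_def by (rule cSup_upper[OF _ opn_bdd]) auto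

lemma opn_least: "(\<And>u. rnorm N u = 1 \<Longrightarrow> rnorm N (M *v u) \<le> c) \<Longrightarrow> mat_opnorm N M \<le> c"
  unfolding mat_opnorm_def by (rule cSup_least[OF opn_ne]) auto

lemma opn_nonneg: "0 \<le> mat_opnorm N M"
proof -
  obtain u where "rnorm N u = 1" using rn_unit_ex[OF N] by blast
  then show ?thesis using opn_ge[of u M] rn_nonneg[OF N, of "M *v u"] by linarith
qed

lemma opn_upper: "rnorm N (M *v u) \<le> mat_opnorm N M * rnorm N u"
proof (cases "u = 0")
  case True
  have "rnorm N (0::real^'n) = 0" using rn_zero_iff[OF N] by simp
  then show ?thesis using True by simp
next
  case False
  then have p: "rnorm N u > 0" by (rule rn_pos[OF N])
  have "rnorm N ((1 / rnorm N u) *\<^sub>R u) = 1" using p by (simp add: rn_scale[OF N])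
  then have "rnorm N (M *v ((1 / rnorm N u) *\<^sub>R u)) \<le> mat_opnorm N M" by (rule opn_ge)
  then have "rnorm N (M *v u) / rnorm N u \<le> mat_opnorm N M"
    using p by (simp add: matrix_vector_mult_scaleR rn_scale[OF N])
  then show ?thesis using p by (simp add: field_simps)
qed

lemma opn_add: "mat_opnorm N (M1 + M2) \<le> mat_opnorm N M1 + mat_opnorm N M2"
proof (rule opn_least)
  fix u :: "real^'n" assume u: "rnorm N u = 1"
  have "rnorm N ((M1 + M2) *v u) \<le> rnorm N (M1 *v u) + rnorm N (M2 *v u)"
    by (simp add: matrix_vector_mult_add_rdistrib rn_tri[OF N])
  also have "\<dots> \<le> mat_opnorm N M1 + mat_opnorm N M2"
    using opn_ge[OF u, of M1] opn_ge[OF u, of M2] by simp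
  finally show "rnorm N ((M1 + M2) *v u) \<le> mat_opnorm N M1 + mat_opnorm N M2" .
qed

lemma opn_scale_le: "mat_opnorm N (c *\<^sub>R M) \<le> \<bar>c\<bar> * mat_opnorm N M"
proof (rule opn_least)
  fix u :: "real^'n" assume u: "rnorm N u = 1"
  show "rnorm N ((c *\<^sub>R M) *v u) \<le> \<bar>c\<bar> * mat_opnorm N M"
    using opn_ge[OF u, of M] by (simp add: mv_scaleR rn_scale[OF N] mult_left_mono)
qed

lemma opn_scale: "mat_opnorm N (c *\<^sub>R M) = \<bar>c\<bar> * mat_opnorm N M"
proof (cases "c = 0")
  case True
  then show ?thesis using opn_scale_le[of 0 M] opn_nonneg[of "0 *\<^sub>R M"] by simp
next
  case False
  have "mat_opnorm N M = mat_opnorm N ((1/c) *\<^sub>R (c *\<^sub>R M))" using False by simp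
  also have "\<dots> \<le> \<bar>1/c\<bar> * mat_opnorm N (c *\<^sub>R M)" by (rule opn_scale_le)
  finally have "\<bar>c\<bar> * mat_opnorm N M \<le> mat_opnorm N (c *\<^sub>R M)"
    using False by (simp add: field_simps)
  then show ?thesis using opn_scale_le[of c M] by simp
qed

lemma opn_zero: "mat_opnorm N 0 = 0"
  using opn_scale[of 0 0] by simp

lemma opn_sum: "mat_opnorm N (\<Sum>a\<in>S. f a) \<le> (\<Sum>a\<in>S. mat_opnorm N (f a))"
proof (induction S rule: infinite_finite_induct)
  case (insert x F)
  then show ?case using opn_add[of "f x" "sum f F"] by simp
qed (auto simp: opn_zero)

lemma opn_pos:
  assumes "M \<noteq> 0" shows "0 < mat_opnorm N M"
proof -
  obtain u where u: "M *v u \<noteq> 0" using assms matrix_eq[of M 0] by auto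
  then have "u \<noteq> 0" by auto
  then have p: "rnorm N u > 0" by (rule rn_pos[OF N])
  have "0 < rnorm N (M *v u)" using u by (rule rn_pos[OF N])
  also have "\<dots> \<le> mat_opnorm N M * rnorm N u" by (rule opn_upper)
  finally show ?thesis using p by (simp add: zero_less_mult_iff)
qed

lemma rowapp_bound: "\<exists>K. \<forall>u. cmod (rowapp w u) \<le> K * rnorm N u"
proof -
  obtain C where C: "C > 0" "\<And>x. norm x \<le> C * rnorm N x" using rn_lower[OF N] by blast
  have "cmod (rowapp w u) \<le> ((\<Sum>i\<in>UNIV. cmod (w$i)) * C) * rnorm N u" for u
  proof -
    have "cmod (rowapp w u) \<le> (\<Sum>i\<in>UNIV. cmod (w$i) * \<bar>u$i\<bar>)"
      unfolding rowapp_def by (rule order_trans[OF norm_sum]) (simp add: norm_mult)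
    also have "\<dots> \<le> (\<Sum>i\<in>UNIV. cmod (w$i) * norm u)"
      by (intro sum_mono mult_left_mono component_le_norm_cart) auto
    also have "\<dots> \<le> (\<Sum>i\<in>UNIV. cmod (w$i) * (C * rnorm N u))"
      by (intro sum_mono mult_left_mono C(2)) auto
    also have "\<dots> = ((\<Sum>i\<in>UNIV. cmod (w$i)) * C) * rnorm N u" by (simp add: sum_distrib_left sum_distrib_right mult.assoc)
    finally show ?thesis .
  qed
  then show ?thesis by blast
qed

lemma cdot_bound: "\<exists>K. \<forall>u. cmod (\<Sum>i\<in>UNIV. w $ i * u $ i) \<le> K * N u"
proof -
  obtain C where C: "C > 0" "\<And>x. norm x \<le> C * N x" using N_lower[OF N] by blast
  have "cmod (\<Sum>i\<in>UNIV. w $ i * u $ i) \<le> ((\<Sum>i\<in>UNIV. cmod (w$i)) * C) * N u" for u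
  proof -
    have "cmod (\<Sum>i\<in>UNIV. w $ i * u $ i) \<le> (\<Sum>i\<in>UNIV. cmod (w$i) * cmod (u$i))"
      by (rule order_trans[OF norm_sum]) (simp add: norm_mult)
    also have "\<dots> \<le> (\<Sum>i\<in>UNIV. cmod (w$i) * norm u)"
      by (intro sum_mono mult_left_mono Finite_Cartesian_Product.norm_nth_le) auto
    also have "\<dots> \<le> (\<Sum>i\<in>UNIV. cmod (w$i) * (C * N u))"
      by (intro sum_mono mult_left_mono C(2)) auto
    also have "\<dots> = ((\<Sum>i\<in>UNIV. cmod (w$i)) * C) * N u" by (simp add: sum_distrib_left sum_distrib_right mult.assoc)
    finally show ?thesis .
  qed
  then show ?thesis by blast
qed

lemma rrow_bdd: "bdd_above {cmod (rowapp w u) | u. rnorm N u = 1}"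
proof -
  obtain K where K: "\<And>u. cmod (rowapp w u) \<le> K * rnorm N u" using rowapp_bound by blast
  show ?thesis
  proof (rule bdd_aboveI)
    fix x assume "x \<in> {cmod (rowapp w u) | u. rnorm N u = 1}"
    then obtain u where "x = cmod (rowapp w u)" "rnorm N u = 1" by blast
    then show "x \<le> K" using K[of u] by simp
  qed
qed

lemma crow_bdd: "bdd_above {cmod (\<Sum>i\<in>UNIV. w $ i * u $ i) | u. N u = 1}"
proof -
  obtain K where K: "\<And>u. cmod (\<Sum>i\<in>UNIV. w $ i * u $ i) \<le> K * N u" using cdot_bound by blast
  show ?thesis
  proof (rule bdd_aboveI)
    fix x assume "x \<in> {cmod (\<Sum>i\<in>UNIV. w $ i * u $ i) | u. N u = 1}"
    then obtain u where "x = cmod (\<Sum>i\<in>UNIV. w $ i * u $ i)" "N u = 1" by blast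
    then show "x \<le> K" using K[of u] by simp
  qed
qed

lemma rrow_ge: "is_real_vec w \<Longrightarrow> rnorm N u = 1 \<Longrightarrow> cmod (rowapp w u) \<le> row_norm N w"
  unfolding row_norm_def by (simp, rule cSup_upper[OF _ rrow_bdd]) auto

lemma rrow_least: "is_real_vec w \<Longrightarrow> (\<And>u. rnorm N u = 1 \<Longrightarrow> cmod (rowapp w u) \<le> c) \<Longrightarrow> row_norm N w \<le> c"
  unfolding row_norm_def using rn_unit_ex[OF N] by (simp, intro cSup_least) auto

lemma row_norm_pos:
  assumes "w \<noteq> 0" shows "0 < row_norm N w"
proof -
  from assms obtain i where i: "w $ i \<noteq> 0" by (auto simp: vec_eq_iff)
  show ?thesis
  proof (cases "is_real_vec w")
    case True
    define u :: "real^'n" where "u = (1 / rnorm N (axis i 1)) *\<^sub>R axis i 1"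
    have p: "rnorm N (axis i 1 :: real^'n) > 0" by (rule rn_pos[OF N]) (simp add: axis_eq_0_iff)
    have u1: "rnorm N u = 1" using p by (simp add: u_def rn_scale[OF N])
    have "rowapp w u = (\<Sum>j\<in>UNIV. if j = i then w $ i * complex_of_real (1 / rnorm N (axis i 1)) else 0)"
      unfolding rowapp_def by (intro sum.cong refl) (simp add: u_def axis_def)
    then have "rowapp w u = w $ i * complex_of_real (1 / rnorm N (axis i 1))" by simp
    then have "0 < cmod (rowapp w u)" using i p by (simp add: norm_mult)
    also have "\<dots> \<le> row_norm N w" by (rule rrow_ge[OF True u1])
    finally show ?thesis .
  next
    case False
    define u :: "complex^'n" where "u = complex_of_real (1 / N (axis i 1)) *s axis i 1"
    have p: "N (axis i 1 :: complex^'n) > 0" by (rule N_pos[OF N]) (simp add: axis_eq_0_iff)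
    have u1: "N u = 1" using p by (simp add: u_def N_scale[OF N] norm_divide)
    have "(\<Sum>j\<in>UNIV. w $ j * u $ j) = (\<Sum>j\<in>UNIV. if j = i then w $ i * complex_of_real (1 / N (axis i 1)) else 0)"
      by (intro sum.cong refl) (simp add: u_def axis_def)
    then have "(\<Sum>j\<in>UNIV. w $ j * u $ j) = w $ i * complex_of_real (1 / N (axis i 1))" by simp
    then have "0 < cmod (\<Sum>j\<in>UNIV. w $ j * u $ j)" using i p by (simp add: norm_mult)
    also have "\<dots> \<le> row_norm N w"
      unfolding row_norm_def using False u1 by (simp, intro cSup_upper[OF _ crow_bdd]) auto
    finally show ?thesis .
  qed
qed

end

lemma polar3: "Re (cis th * a * b) = cmod a * cmod b * cos (th + Arg a + Arg b)"
proof -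
  have "cis th * a * b = rcis 1 th * rcis (cmod a) (Arg a) * rcis (cmod b) (Arg b)"
    by (simp add: rcis_cmod_Arg cis_rcis_eq)
  also have "\<dots> = rcis (cmod a * cmod b) (th + Arg a + Arg b)" by (simp add: rcis_mult)
  finally show ?thesis by simp
qed

lemma exp_polar2: "exp (complex_of_real t * l) = complex_of_real (exp (Re l * t)) * cis (Im l * t)"
  by (subst exp_eq_polar) (simp add: mult_ac)

lemma rowapp_smult: "rowapp (c *s w) u = c * rowapp w u"
  by (simp add: rowapp_def sum_distrib_left mult_ac)

lemma Re_ofreal_mult: "Re (complex_of_real a * z) = a * Re z" by simp

lemma mv_msum: "(\<Sum>a\<in>S. f a) *v (u::'a::comm_ring_1^'n) = (\<Sum>a\<in>S. f a *v u)"
proof (induction S rule: infinite_finite_induct)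
  case (insert x F)
  then show ?case by (simp add: matrix_vector_mult_add_rdistrib)
qed (auto simp: vec_eq_iff matrix_vector_mult_def)

lemma rel_err:
  fixes T P R S :: real
  assumes "T \<le> P + R" "P \<le> T + R" "P > 0" "R \<le> S"
  shows "\<exists>x. T = P * (1 + x) \<and> \<bar>x\<bar> \<le> S / P"
proof -
  have "\<bar>T - P\<bar> \<le> S" using assms by linarith
  then have "\<bar>(T - P) / P\<bar> \<le> S / P" using assms(3) by (simp add: divide_right_mono)
  moreover have "T = P * (1 + (T - P) / P)" using assms(3) by (simp add: field_simps)
  ultimately show ?thesis by blast
qed

lemma approx_ratio:
  fixes a b a1 b1 x y ex ey :: real
  assumes "a = a1 * (1 + x)" "b = b1 * (1 + y)" "\<bar>x\<bar> \<le> ex" "\<bar>y\<bar> \<le> ey" "ey < 1" "b1 > 0"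
  shows "approx_prec (a / b) (a1 / b1) ((ex + ey) / (1 - ey))"
proof -
  have y1: "1 + y > 0" using assms(4,5) by linarith
  define c where "c = (x - y) / (1 + y)"
  have h1: "1 + c = (1 + x) / (1 + y)"
  proof -
    have "1 + c = (1 + y) / (1 + y) + (x - y) / (1 + y)" using y1 by (simp add: c_def)
    also have "\<dots> = ((1 + y) + (x - y)) / (1 + y)" by (rule add_divide_distrib[symmetric])
    finally show ?thesis by simp
  qed
  have "a / b = (a1 / b1) * ((1 + x) / (1 + y))" unfolding assms(1,2) by simp
  then have ab: "a / b = (a1 / b1) * (1 + c)" by (simp add: h1)
  have "\<bar>c\<bar> \<le> (ex + ey) / (1 - ey)"
  proof -
    have "\<bar>c\<bar> = \<bar>x - y\<bar> / \<bar>1 + y\<bar>" unfolding c_def by (rule abs_divide)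
    also have "\<dots> = \<bar>x - y\<bar> / (1 + y)" using y1 by simp
    also have "\<dots> \<le> (ex + ey) / (1 + y)"
      using y1 assms(3,4) by (intro divide_right_mono) linarith+
    also have "\<dots> \<le> (ex + ey) / (1 - ey)"
    proof (rule divide_left_mono)
      show "1 - ey \<le> 1 + y" using assms(4) by linarith
      show "0 \<le> ex + ey" using assms(3,4) by linarith
      show "0 < (1 + y) * (1 - ey)" using y1 assms(5) by simp
    qed
    finally show ?thesis .
  qed
  then show ?thesis unfolding approx_prec_def using ab by blast
qed

context spec
begin

abbreviation "wh j \<equiv> normalize_row N (w j)"
abbreviation "vh j \<equiv> normalize_vec N (v j)"
abbreviation "fc j \<equiv> fcond N w v j"

lemma Rpos: "j \<in> {1..q} \<Longrightarrow> 0 < row_norm N (w j)"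
  using eigvecs row_norm_pos[OF norm] by blast

lemma Npos: "j \<in> {1..q} \<Longrightarrow> 0 < N (v j)"
  using eigvecs N_pos[OF norm] by blast

lemma fpos: "j \<in> {1..q} \<Longrightarrow> 0 < fc j"
  using Rpos Npos by (simp add: fcond_def)

lemma w_dec: "j \<in> {1..q} \<Longrightarrow> w j = complex_of_real (row_norm N (w j)) *s wh j"
  using Rpos[of j] by (simp add: normalize_row_def vec_eq_iff)

lemma v_dec: "j \<in> {1..q} \<Longrightarrow> v j = complex_of_real (N (v j)) *s vh j"
  using Npos[of j] by (simp add: normalize_vec_def vec_eq_iff)

lemma wh_ne: "j \<in> {1..q} \<Longrightarrow> rowapp (w j) u \<noteq> 0 \<Longrightarrow> rowapp (wh j) u \<noteq> 0"
  using Rpos[of j] by (simp add: normalize_row_def rowapp_smult)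

lemma exp_lam:
  assumes j: "j \<in> {1..q}"
  shows "exp (complex_of_real t * lam j) = complex_of_real (exp (r j * t)) * cis (Im (lam j) * t)"
  using class_facts(2)[OF j] by (simp add: exp_polar2)

lemma Re_lin: "Re (\<Sum>l\<in>S. z l * complex_of_real (a l)) = (\<Sum>l\<in>S. Re (z l) * a l)"
  by (simp add: Re_sum)

definition "Dm t j = (\<chi> k l. (if Im (lam j) = 0 then 1 else 2) *
       Re (exp (complex_of_real t * lam j) * v j $ k * w j $ l))"

lemma Dm_mv: "Dm t j *v u = Cj t j u"
proof -
  have "(Dm t j *v u) $ k = Cj t j u $ k" for k
  proof -
    define s :: real where "s = (if Im (lam j) = 0 then 1 else 2)"
    define c where "c = exp (complex_of_real t * lam j)"
    have "(Dm t j *v u) $ k = (\<Sum>l\<in>UNIV. s * Re (c * v j $ k * w j $ l) * u $ l)"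
      by (simp only: Dm_def matrix_vector_mult_def s_def c_def vec_lambda_beta)
    also have "\<dots> = s * (\<Sum>l\<in>UNIV. Re (c * v j $ k * w j $ l) * u $ l)"
      by (simp only: sum_distrib_left mult.assoc)
    also have "\<dots> = s * Re (\<Sum>l\<in>UNIV. (c * v j $ k * w j $ l) * complex_of_real (u $ l))"
      by (simp only: Re_lin)
    also have "(\<Sum>l\<in>UNIV. (c * v j $ k * w j $ l) * complex_of_real (u $ l)) = c * rowapp (w j) u * v j $ k"
      by (simp add: rowapp_def sum_distrib_left sum_distrib_right mult_ac)
    also have "s * Re (c * rowapp (w j) u * v j $ k) = Cj t j u $ k"
      by (simp only: Cj_def s_def c_def vec_lambda_beta)
    finally show ?thesis .
  qed
  then show ?thesis by (simp add: vec_eq_iff)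
qed

lemma mexp_Dm: "mexp t A = (\<Sum>j\<in>{1..q}. Dm t j)"
  by (simp add: matrix_eq mv_msum Dm_mv mexp_decomp)

lemma Re_sum_helper: "Re (\<Sum>l\<in>S. f l) = (\<Sum>l\<in>S. Re (f l))" by simp

lemma Cj_complex:
  assumes j: "j \<in> {1..q}" and c: "Im (lam j) \<noteq> 0"
  shows "Cj t j u = (2 * exp (r j * t) * fc j * cmod (rowapp (wh j) u)) *\<^sub>R Thu N lam w v j t u"
proof -
  have "Cj t j u $ k = (2 * exp (r j * t) * fc j * cmod (rowapp (wh j) u)) * Thu N lam w v j t u $ k" for k
  proof -
    have "exp (complex_of_real t * lam j) * rowapp (w j) u * v j $ k
       = complex_of_real (exp (r j * t) * fc j) * (cis (Im (lam j) * t) * vh j $ k * rowapp (wh j) u)"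
      apply (subst w_dec[OF j], subst v_dec[OF j])
      by (simp add: exp_lam[OF j] rowapp_smult fcond_def mult_ac)
    then have "Cj t j u $ k = 2 * Re (complex_of_real (exp (r j * t) * fc j) * (cis (Im (lam j) * t) * vh j $ k * rowapp (wh j) u))"
      using c by (simp only: Cj_def vec_lambda_beta if_False)
    also have "\<dots> = 2 * ((exp (r j * t) * fc j) * Re (cis (Im (lam j) * t) * vh j $ k * rowapp (wh j) u))"
      by (simp only: Re_ofreal_mult)
    also have "\<dots> = 2 * ((exp (r j * t) * fc j) * (cmod (vh j $ k) * cmod (rowapp (wh j) u) * cos (Im (lam j) * t + Arg (vh j $ k) + Arg (rowapp (wh j) u))))"
      by (simp only: polar3)
    finally show ?thesis by (simp add: Thu_def Theta_u_def mult_ac)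
  qed
  then show ?thesis by (simp add: vec_eq_iff)
qed

lemma Dm_complex:
  assumes j: "j \<in> {1..q}" and c: "Im (lam j) \<noteq> 0"
  shows "Dm t j = (2 * exp (r j * t) * fc j) *\<^sub>R Thm N lam w v j t"
proof -
  have "Dm t j $ k $ l = (2 * exp (r j * t) * fc j) * Thm N lam w v j t $ k $ l" for k l
  proof -
    have "exp (complex_of_real t * lam j) * v j $ k * w j $ l
       = complex_of_real (exp (r j * t) * fc j) * (cis (Im (lam j) * t) * vh j $ k * wh j $ l)"
      apply (subst w_dec[OF j], subst v_dec[OF j])
      by (simp add: exp_lam[OF j] fcond_def mult_ac)
    then have "Dm t j $ k $ l = 2 * Re (complex_of_real (exp (r j * t) * fc j) * (cis (Im (lam j) * t) * vh j $ k * wh j $ l))"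
      using c by (simp only: Dm_def vec_lambda_beta if_False)
    also have "\<dots> = 2 * ((exp (r j * t) * fc j) * Re (cis (Im (lam j) * t) * vh j $ k * wh j $ l))"
      by (simp only: Re_ofreal_mult)
    also have "\<dots> = 2 * ((exp (r j * t) * fc j) * (cmod (vh j $ k) * cmod (wh j $ l) * cos (Im (lam j) * t + Arg (vh j $ k) + Arg (wh j $ l))))"
      by (simp only: polar3)
    finally show ?thesis by (simp add: Thm_def Theta_m_def mult_ac)
  qed
  then show ?thesis by (simp add: vec_eq_iff)
qed

end

context spec
begin

definition "vr j = (\<chi> k. Re (vh j $ k))"
definition "gu t j u = (if Im (lam j) = 0 then 1 else 2 * rnorm N (Thu N lam w v j t u))"
definition "gm t j = (if Im (lam j) = 0 then 1 else 2 * mat_opnorm N (Thm N lam w v j t))"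

lemma vh_real: "j \<in> {1..q} \<Longrightarrow> Im (lam j) = 0 \<Longrightarrow> Im (vh j $ k) = 0"
  using eigvecs by (auto simp: normalize_vec_def is_real_vec_def)

lemma w_real: "j \<in> {1..q} \<Longrightarrow> Im (lam j) = 0 \<Longrightarrow> is_real_vec (w j)"
  using eigvecs by auto

lemma wh_real: "j \<in> {1..q} \<Longrightarrow> Im (lam j) = 0 \<Longrightarrow> Im (rowapp (wh j) u) = 0"
  using w_real[of j] by (simp add: normalize_row_def rowapp_def is_real_vec_def Im_sum)

lemma N_vh: "j \<in> {1..q} \<Longrightarrow> N (vh j) = 1"
  using Npos[of j] by (simp add: normalize_vec_def N_scale[OF norm] norm_divide)

lemma vh_ne: "j \<in> {1..q} \<Longrightarrow> vh j \<noteq> 0"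
  using N_vh[of j] N_0[OF norm] by auto

lemma rn_vr: "j \<in> {1..q} \<Longrightarrow> Im (lam j) = 0 \<Longrightarrow> rnorm N (vr j) = 1"
proof -
  assume j: "j \<in> {1..q}" and c: "Im (lam j) = 0"
  have "cvec (vr j) = vh j" using vh_real[OF j c] by (simp add: cvec_def vr_def vec_eq_iff complex_eq_iff)
  then show ?thesis using N_vh[OF j] by (simp add: rnorm_def)
qed

lemma Cj_real:
  assumes j: "j \<in> {1..q}" and c: "Im (lam j) = 0"
  shows "Cj t j u = (exp (r j * t) * fc j * Re (rowapp (wh j) u)) *\<^sub>R vr j"
proof -
  have "Cj t j u $ k = (exp (r j * t) * fc j * Re (rowapp (wh j) u)) * vr j $ k" for k
  proof -
    have "exp (complex_of_real t * lam j) * rowapp (w j) u * v j $ k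
       = complex_of_real (exp (r j * t) * fc j) * (rowapp (wh j) u * vh j $ k)"
      apply (subst w_dec[OF j], subst v_dec[OF j])
      by (simp add: exp_lam[OF j] c rowapp_smult fcond_def mult_ac)
    then have "Cj t j u $ k = Re (complex_of_real (exp (r j * t) * fc j) * (rowapp (wh j) u * vh j $ k))"
      using c by (simp only: Cj_def vec_lambda_beta eqTrueI[OF refl] if_True mult_1_left)
    also have "\<dots> = (exp (r j * t) * fc j) * Re (rowapp (wh j) u * vh j $ k)"
      by (simp only: Re_ofreal_mult)
    also have "Re (rowapp (wh j) u * vh j $ k) = Re (rowapp (wh j) u) * Re (vh j $ k)"
      using wh_real[OF j c] vh_real[OF j c] by simp
    finally show ?thesis by (simp add: vr_def)
  qed
  then show ?thesis by (simp add: vec_eq_iff)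
qed

lemma rn_Cj:
  assumes j: "j \<in> {1..q}"
  shows "rnorm N (Cj t j u) = exp (r j * t) * fc j * cmod (rowapp (wh j) u) * gu t j u"
proof (cases "Im (lam j) = 0")
  case True
  show ?thesis
    using fpos[OF j] cmod_eq_Re[OF wh_real[OF j True]] rn_vr[OF j True]
    by (simp add: Cj_real[OF j True] rn_scale[OF norm] gu_def True abs_mult)
next
  case False
  show ?thesis
    using fpos[OF j]
    by (simp add: Cj_complex[OF j False] rn_scale[OF norm] gu_def False abs_mult)
qed

lemma opn_Dm:
  assumes j: "j \<in> {1..q}"
  shows "mat_opnorm N (Dm t j) = exp (r j * t) * fc j * gm t j"
proof (cases "Im (lam j) = 0")
  case False
  show ?thesis
    using fpos[OF j] by (simp add: Dm_complex[OF j False] opn_scale[OF norm] gm_def False abs_mult)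
next
  case True
  define E where "E = exp (r j * t) * fc j"
  define R where "R = row_norm N (w j)"
  have E0: "E > 0" using fpos[OF j] by (simp add: E_def)
  have R0: "R > 0" using Rpos[OF j] by (simp add: R_def)
  have wu: "cmod (rowapp (w j) u) = R * cmod (rowapp (wh j) u)" for u
    using Rpos[OF j] by (subst w_dec[OF j]) (simp add: rowapp_smult norm_mult R_def)
  have rnD: "rnorm N (Dm t j *v u) = E * cmod (rowapp (wh j) u)" for u
    by (simp add: Dm_mv rn_Cj[OF j] gu_def True E_def)
  have le: "mat_opnorm N (Dm t j) \<le> E"
  proof (rule opn_least[OF norm])
    fix u :: "real^'n" assume u: "rnorm N u = 1"
    have "cmod (rowapp (w j) u) \<le> R" unfolding R_def by (rule rrow_ge[OF norm w_real[OF j True] u])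
    then have "cmod (rowapp (wh j) u) \<le> 1" using R0 by (simp add: wu)
    then show "rnorm N (Dm t j *v u) \<le> E" using E0 by (simp add: rnD mult_left_le)
  qed
  have "R \<le> R * mat_opnorm N (Dm t j) / E"
    unfolding R_def
  proof (rule rrow_least[OF norm w_real[OF j True]])
    fix u :: "real^'n" assume u: "rnorm N u = 1"
    have "rnorm N (Dm t j *v u) \<le> mat_opnorm N (Dm t j)" by (rule opn_ge[OF norm u])
    then have "cmod (rowapp (wh j) u) \<le> mat_opnorm N (Dm t j) / E" using E0 by (simp add: rnD field_simps)
    then show "cmod (rowapp (w j) u) \<le> row_norm N (w j) * mat_opnorm N (Dm t j) / E"
      using R0 by (simp add: wu R_def mult_left_mono times_divide_eq_right[symmetric] del: times_divide_eq_right)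
  qed
  then have "E \<le> mat_opnorm N (Dm t j)" using R0 E0 by (simp add: field_simps)
  with le show ?thesis by (simp add: gm_def True E_def)
qed

lemma re_nonzero:
  assumes j: "j \<in> {1..q}" and c: "Im (lam j) \<noteq> 0" and c0: "cc \<noteq> 0"
  shows "\<exists>k. Re (cc * vh j $ k) \<noteq> 0"
proof (rule ccontr)
  assume "\<not> ?thesis"
  then have re0: "\<And>k. Re (cc * vh j $ k) = 0" by blast
  define x :: "real^'n" where "x = (\<chi> k. Im (cc * vh j $ k))"
  have cx: "cc *s vh j = \<i> *s cvec x"
    using re0 by (simp add: vec_eq_iff x_def cvec_def complex_eq_iff)
  have eigvh: "cmat A *v vh j = lam j *s vh j"
    using eigvecs j by (simp add: normalize_vec_def mat_vec_smult vector_smult_assoc mult.commute)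
  have "\<i> *s (cmat A *v cvec x) = \<i> *s (lam j *s cvec x)"
  proof -
    have "\<i> *s (cmat A *v cvec x) = cmat A *v (cc *s vh j)" by (simp add: cx mat_vec_smult)
    also have "\<dots> = cc *s (lam j *s vh j)" by (simp add: mat_vec_smult eigvh)
    also have "\<dots> = lam j *s (cc *s vh j)" by (simp add: vector_smult_assoc mult.commute)
    finally show ?thesis by (simp add: cx vector_smult_assoc mult.commute)
  qed
  then have "cmat A *v cvec x = lam j *s cvec x"
    by (metis vector_smult_assoc complex_i_not_zero divide_self_if mult.commute vector_smult_lid
        nonzero_divide_eq_eq)
  then have "cvec (A *v x) = lam j *s cvec x" by (simp add: cvec_mv)
  then have "\<forall>k. Im (lam j) * x $ k = 0"
    by (auto simp: vec_eq_iff cvec_def complex_eq_iff dest: spec)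
  then have "x = 0" using c by (simp add: vec_eq_iff)
  then have "cc *s vh j = 0" using cx by (simp add: cvec_def vec_eq_iff)
  then show False using c0 vh_ne[OF j] by (simp add: vec_eq_iff)
qed

lemma Thu_ne:
  assumes j: "j \<in> {1..q}" and c: "Im (lam j) \<noteq> 0" and wu: "rowapp (wh j) u \<noteq> 0"
  shows "Thu N lam w v j t u \<noteq> 0"
proof
  assume T0: "Thu N lam w v j t u = 0"
  obtain k where k: "Re ((cis (Im (lam j) * t) * rowapp (wh j) u) * vh j $ k) \<noteq> 0"
    using re_nonzero[OF j c, of "cis (Im (lam j) * t) * rowapp (wh j) u"] wu by auto
  have "Re ((cis (Im (lam j) * t) * rowapp (wh j) u) * vh j $ k) = Re (cis (Im (lam j) * t) * vh j $ k * rowapp (wh j) u)"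
    by (simp only: mult_ac)
  also have "\<dots> = cmod (rowapp (wh j) u) * Thu N lam w v j t u $ k"
    by (simp only: polar3) (simp add: Thu_def Theta_u_def mult_ac)
  also have "\<dots> = 0" using T0 by simp
  finally show False using k by simp
qed

lemma Thm_ne:
  assumes j: "j \<in> {1..q}" and c: "Im (lam j) \<noteq> 0"
  shows "Thm N lam w v j t \<noteq> 0"
proof
  assume T0: "Thm N lam w v j t = 0"
  have "wh j \<noteq> 0" using eigvecs j Rpos[OF j] by (auto simp: normalize_row_def vec_eq_iff)
  then obtain l where l: "wh j $ l \<noteq> 0" by (auto simp: vec_eq_iff)
  obtain k where k: "Re ((cis (Im (lam j) * t) * wh j $ l) * vh j $ k) \<noteq> 0"
    using re_nonzero[OF j c, of "cis (Im (lam j) * t) * wh j $ l"] l by auto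
  have "Re ((cis (Im (lam j) * t) * wh j $ l) * vh j $ k) = Re (cis (Im (lam j) * t) * vh j $ k * wh j $ l)"
    by (simp only: mult_ac)
  also have "\<dots> = Thm N lam w v j t $ k $ l"
    by (simp only: polar3) (simp add: Thm_def Theta_m_def mult_ac)
  also have "\<dots> = 0" using T0 by simp
  finally show False using k by simp
qed

lemma gu_pos: "j \<in> {1..q} \<Longrightarrow> rowapp (w j) u \<noteq> 0 \<Longrightarrow> 0 < gu t j u"
  using Thu_ne[of j u t] wh_ne[of j u] rn_pos[OF norm] by (auto simp: gu_def)

lemma gm_pos: "j \<in> {1..q} \<Longrightarrow> 0 < gm t j"
  using Thm_ne[of j t] opn_pos[OF norm] by (auto simp: gm_def)

lemma gu_nonneg: "0 \<le> gu t j u"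
  using rn_nonneg[OF norm] by (simp add: gu_def)

lemma gm_nonneg: "0 \<le> gm t j"
  using opn_nonneg[OF norm] by (simp add: gm_def)

end

lemma alg1:
  fixes f1 c1 g1 :: real
  assumes "f1 > 0" "c1 > 0" "g1 > 0"
  shows "exp ((a - b) * t) * (fj / f1) * (cj / c1) * (gj / g1) = (exp (a * t) * fj * cj * gj) / (exp (b * t) * f1 * c1 * g1)"
proof -
  have "exp ((a - b) * t) = exp (a * t) / exp (b * t)" by (simp add: left_diff_distrib exp_diff)
  then show ?thesis using assms by simp
qed

lemma alg2:
  fixes f1 g1 :: real
  assumes "f1 > 0" "g1 > 0"
  shows "exp ((a - b) * t) * (fj / f1) * (gj / g1) = (exp (a * t) * fj * gj) / (exp (b * t) * f1 * g1)"
proof -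
  have "exp ((a - b) * t) = exp (a * t) / exp (b * t)" by (simp add: left_diff_distrib exp_diff)
  then show ?thesis using assms by simp
qed

lemma rowapp_scaleR: "rowapp w (c *\<^sub>R u) = complex_of_real c * rowapp w u"
  by (simp add: rowapp_def sum_distrib_left mult_ac)

context spec
begin

lemma one_in: "1 \<in> {1..q}" using q_pos by simp

lemma Icc_split: "{1..q} = insert 1 {2..q}" using q_pos by auto

lemma Gu_eq:
  assumes "rowapp (w 1) u \<noteq> 0"
  shows "Gu N lam w v j t u = gu t j u / gu t 1 u"
  using gu_pos[OF one_in assms, of t]
  by (auto simp: Gu_def gu_def)

lemma Gm_eq: "Gm N lam w v j t = gm t j / gm t 1"
  using gm_pos[OF one_in, of t]
  by (auto simp: Gm_def gm_def)

lemma C1_pos: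
  assumes "rowapp (w 1) u \<noteq> 0"
  shows "0 < rnorm N (Cj t 1 u)"
  unfolding rn_Cj[OF one_in]
  using fpos[OF one_in] wh_ne[OF one_in assms] gu_pos[OF one_in assms, of t]
  by simp

lemma D1_pos: "0 < mat_opnorm N (Dm t 1)"
  unfolding opn_Dm[OF one_in]
  using fpos[OF one_in] gm_pos[OF one_in, of t] by simp

lemma eps_u_eq:
  assumes u: "rowapp (w 1) u \<noteq> 0"
  shows "eps_u N q r lam w v t u = (\<Sum>j\<in>{2..q}. rnorm N (Cj t j u)) / rnorm N (Cj t 1 u)"
  unfolding eps_u_def sum_divide_distrib
proof (intro sum.cong refl)
  fix j assume "j \<in> {2..q}"
  then have j: "j \<in> {1..q}" by auto
  show "exp ((r j - r 1) * t) * (fc j / fc 1) *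
        (cmod (rowapp (wh j) u) / cmod (rowapp (wh 1) u)) * Gu N lam w v j t u =
        rnorm N (Cj t j u) / rnorm N (Cj t 1 u)"
    unfolding Gu_eq[OF u] rn_Cj[OF j] rn_Cj[OF one_in]
    by (rule alg1) (use fpos[OF one_in] wh_ne[OF one_in u] gu_pos[OF one_in u, of t] in auto)
qed

lemma eps_m_eq:
  "eps_m N q r lam w v t = (\<Sum>j\<in>{2..q}. mat_opnorm N (Dm t j)) / mat_opnorm N (Dm t 1)"
  unfolding eps_m_def sum_divide_distrib
proof (intro sum.cong refl)
  fix j assume "j \<in> {2..q}"
  then have j: "j \<in> {1..q}" by auto
  show "exp ((r j - r 1) * t) * (fc j / fc 1) * Gm N lam w v j t =
        mat_opnorm N (Dm t j) / mat_opnorm N (Dm t 1)"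
    unfolding Gm_eq opn_Dm[OF j] opn_Dm[OF one_in]
    by (rule alg2) (use fpos[OF one_in] gm_pos[OF one_in, of t] in auto)
qed

lemma Kinf_z_eq:
  assumes y: "rowapp (w 1) y \<noteq> 0" and z: "rowapp (w 1) z \<noteq> 0"
  shows "Kinf_z N lam w v t y z = rnorm N (Cj t 1 z) / rnorm N (Cj t 1 y)"
proof -
  have p: "0 < exp (r 1 * t) * fc 1" using fpos[OF one_in] by simp
  show ?thesis
    unfolding rn_Cj[OF one_in] Kinf_z_def gu_def
    using p by (auto simp: field_simps)
qed

lemma Kinf_m_eq:
  assumes y: "rowapp (w 1) y \<noteq> 0"
  shows "Kinf_m N lam w v t y = mat_opnorm N (Dm t 1) / rnorm N (Cj t 1 y)"
proof -
  have p: "0 < exp (r 1 * t) * fc 1" using fpos[OF one_in] by simp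
  show ?thesis
    unfolding rn_Cj[OF one_in] opn_Dm[OF one_in] Kinf_m_def gu_def gm_def
    using p by (auto simp: field_simps)
qed

lemma main_u:
  assumes u: "rowapp (w 1) u \<noteq> 0"
  shows "\<exists>x. rnorm N (mexp t A *v u) = rnorm N (Cj t 1 u) * (1 + x) \<and> \<bar>x\<bar> \<le> eps_u N q r lam w v t u"
proof -
  define Rv where "Rv = (\<Sum>j\<in>{2..q}. Cj t j u)"
  have E: "mexp t A *v u = Cj t 1 u + Rv"
    unfolding mexp_decomp Rv_def by (subst Icc_split) simp
  have "\<exists>x. rnorm N (mexp t A *v u) = rnorm N (Cj t 1 u) * (1 + x) \<and>
      \<bar>x\<bar> \<le> (\<Sum>j\<in>{2..q}. rnorm N (Cj t j u)) / rnorm N (Cj t 1 u)"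
  proof (rule rel_err)
    show "rnorm N (mexp t A *v u) \<le> rnorm N (Cj t 1 u) + rnorm N Rv"
      unfolding E by (rule rn_tri[OF norm])
    have "Cj t 1 u = (mexp t A *v u) + (- Rv)" unfolding E by simp
    then show "rnorm N (Cj t 1 u) \<le> rnorm N (mexp t A *v u) + rnorm N Rv"
      using rn_tri[OF norm, of "mexp t A *v u" "- Rv"] rn_minus[OF norm, of Rv] by simp
    show "0 < rnorm N (Cj t 1 u)" by (rule C1_pos[OF u])
    show "rnorm N Rv \<le> (\<Sum>j\<in>{2..q}. rnorm N (Cj t j u))"
      unfolding Rv_def by (rule rn_sum[OF norm])
  qed
  then show ?thesis by (simp add: eps_u_eq[OF u])
qed

lemma main_m:
  shows "\<exists>x. mat_opnorm N (mexp t A) = mat_opnorm N (Dm t 1) * (1 + x) \<and> \<bar>x\<bar> \<le> eps_m N q r lam w v t"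
proof -
  define Rv where "Rv = (\<Sum>j\<in>{2..q}. Dm t j)"
  have E: "mexp t A = Dm t 1 + Rv"
    unfolding mexp_Dm Rv_def by (subst Icc_split) simp
  have "\<exists>x. mat_opnorm N (mexp t A) = mat_opnorm N (Dm t 1) * (1 + x) \<and>
      \<bar>x\<bar> \<le> (\<Sum>j\<in>{2..q}. mat_opnorm N (Dm t j)) / mat_opnorm N (Dm t 1)"
  proof (rule rel_err)
    show "mat_opnorm N (mexp t A) \<le> mat_opnorm N (Dm t 1) + mat_opnorm N Rv"
      unfolding E by (rule opn_add[OF norm])
    have "Dm t 1 = mexp t A + (-1) *\<^sub>R Rv" unfolding E by simp
    then show "mat_opnorm N (Dm t 1) \<le> mat_opnorm N (mexp t A) + mat_opnorm N Rv"
      using opn_add[OF norm, of "mexp t A" "(-1) *\<^sub>R Rv"] opn_scale[OF norm, of "-1" Rv] by simp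
    show "0 < mat_opnorm N (Dm t 1)" by (rule D1_pos)
    show "mat_opnorm N Rv \<le> (\<Sum>j\<in>{2..q}. mat_opnorm N (Dm t j))"
      unfolding Rv_def by (rule opn_sum[OF norm])
  qed
  then show ?thesis by (simp add: eps_m_eq)
qed

end

theorem theorem11:
  fixes A :: "real^'n^'n" and N :: "complex^'n \<Rightarrow> real"
    and q :: nat and r :: "nat \<Rightarrow> real" and lam :: "nat \<Rightarrow> complex"
    and w v :: "nat \<Rightarrow> complex^'n" and y0 z0 :: "real^'n" and t :: real
  assumes norm: "is_cnorm N"
    and real_parts: "Re ` eigenvalues A = r ` {1..q}"
    and r_decr: "\<forall>i\<in>{1..q}. \<forall>j\<in>{1..q}. i < j \<longrightarrow> r j < r i"
    and classes: "\<forall>j\<in>{1..q}. eig_class A (r j) (lam j)"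
    and eigvecs: "\<forall>j\<in>{1..q}.
         w j \<noteq> 0 \<and> w j v* cmat A = lam j *s w j \<and>
         v j \<noteq> 0 \<and> cmat A *v v j = lam j *s v j \<and>
         (\<Sum>i\<in>UNIV. w j $ i * v j $ i) = 1 \<and>
         (Im (lam j) = 0 \<longrightarrow> is_real_vec (w j) \<and> is_real_vec (v j))"
    and y0: "rowapp (w 1) y0 \<noteq> 0"
    and z0_unit: "rnorm N z0 = 1"
    and z0: "rowapp (w 1) z0 \<noteq> 0"
    and small: "eps_u N q r lam w v t ((1 / rnorm N y0) *\<^sub>R y0) < 1"
  shows "approx_prec (Kz N A t ((1 / rnorm N y0) *\<^sub>R y0) z0)
                     (Kinf_z N lam w v t ((1 / rnorm N y0) *\<^sub>R y0) z0)
                     ((eps_u N q r lam w v t z0 + eps_u N q r lam w v t ((1 / rnorm N y0) *\<^sub>R y0))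
                        / (1 - eps_u N q r lam w v t ((1 / rnorm N y0) *\<^sub>R y0)))
       \<and> approx_prec (Km N A t ((1 / rnorm N y0) *\<^sub>R y0))
                     (Kinf_m N lam w v t ((1 / rnorm N y0) *\<^sub>R y0))
                     ((eps_m N q r lam w v t + eps_u N q r lam w v t ((1 / rnorm N y0) *\<^sub>R y0))
                        / (1 - eps_u N q r lam w v t ((1 / rnorm N y0) *\<^sub>R y0)))"
proof -
  interpret S: spec A N q r lam w v
    using norm real_parts r_decr classes eigvecs by unfold_locales
  define yh where "yh = (1 / rnorm N y0) *\<^sub>R y0"
  have "y0 \<noteq> 0" using y0 by (auto simp: rowapp_def)
  then have "rnorm N y0 > 0" by (rule rn_pos[OF norm])
  then have yh: "rowapp (w 1) yh \<noteq> 0" using y0 by (simp add: yh_def rowapp_scaleR)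
  obtain xz where xz: "rnorm N (mexp t A *v z0) = rnorm N (S.Cj t 1 z0) * (1 + xz)"
      "\<bar>xz\<bar> \<le> eps_u N q r lam w v t z0"
    using S.main_u[OF z0, of t] by blast
  obtain xy where xy: "rnorm N (mexp t A *v yh) = rnorm N (S.Cj t 1 yh) * (1 + xy)"
      "\<bar>xy\<bar> \<le> eps_u N q r lam w v t yh"
    using S.main_u[OF yh, of t] by blast
  obtain xm where xm: "mat_opnorm N (mexp t A) = mat_opnorm N (S.Dm t 1) * (1 + xm)"
      "\<bar>xm\<bar> \<le> eps_m N q r lam w v t"
    using S.main_m[of t] by blast
  have sm: "eps_u N q r lam w v t yh < 1" using small by (simp add: yh_def)
  have b1: "0 < rnorm N (S.Cj t 1 yh)" by (rule S.C1_pos[OF yh])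
  have 1: "approx_prec (Kz N A t yh z0) (Kinf_z N lam w v t yh z0)
      ((eps_u N q r lam w v t z0 + eps_u N q r lam w v t yh) / (1 - eps_u N q r lam w v t yh))"
    unfolding Kz_def S.Kinf_z_eq[OF yh z0]
    by (rule approx_ratio[OF xz(1) xy(1) xz(2) xy(2) sm b1])
  have 2: "approx_prec (Km N A t yh) (Kinf_m N lam w v t yh)
      ((eps_m N q r lam w v t + eps_u N q r lam w v t yh) / (1 - eps_u N q r lam w v t yh))"
    unfolding Km_def S.Kinf_m_eq[OF yh]
    by (rule approx_ratio[OF xm(1) xy(1) xm(2) xy(2) sm b1])
  show ?thesis using 1 2 unfolding yh_def by blast
qed

end
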